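(* Let $\mathcal{H}$ be a complex Hilbert space of finite dimension $n\ge2$, $m\ge2$, and let $\mathcal{G}=(\{1,\dots,m\},E)$ be a connected undirected graph. Fix $\alpha\in(0,1)$. The quantum gossip algorithm evolves a density operator on $\mathcal{H}^{\otimes m}$ by, at each time $t$, selecting an edge $(j,k)\in E$ and applying $$\rho(t+1)=\mathcal{E}_{j,k}(\rho(t))=(1-\alpha)\rho(t)+\alpha\,U_{(j,k)}\rho(t)U_{(j,k)}^\dagger .$$ Let $\rho_0=\rho(0)$ and $\rho_*=\frac{1}{m!}\sum_{\pi}U_\pi\rho_0U_\pi^\dagger$ (sum over all permutations of $\{1,\dots,m\}$). Then: (i) if the edges are selected deterministically by periodically cycling, in any predefined way, through the set of edges (each period containing every edge), then $\rho(t)\to\rho_*$, and the system converges to symmetric state consensus (SSC) for every initial state; (ii) if at each time the edge is selected independently at random according to a fixed distribution $\{q_{j,k}>0\}$ with $\sum_{(j,k)\in E}q_{j,k}=1$, then the expected state, which evolves as $\rho(t+1)=\sum_{(j,k)\in E}q_{j,k}\mathcal{E}_{j,k}(\rho(t))$, converges to $\rho_*$, hence to SSC; (iii) with the same random edge selection, convergence holds with probability one along trajectories in the sense that for any $\delta,\varepsilon>0$ there exists $T>0$ such that $\mathbb{P}[\mathrm{Tr}((\rho(T)-\rho_* )^2)>\varepsilon]<\delta$, where $\rho_*\in\mathcal{C}_{\rm SSC}$. Furthermore, for these evolutions, $S$-average SSC is attained for a self-adjoint $S$ on $\mathcal{H}^{\otimes m}$ if and only if there exists a self-adjoint $\sigma$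 on $\mathcal{H}$ with $S=\frac1m\sum_{i=1}^m\sigma^{(i)}$.
   Context: For $X$ an operator on $\mathcal{H}$, $X^{(i)}=I^{\otimes(i-1)}\otimes X\otimes I^{\otimes(m-i)}$. For a permutation $\pi$ of $\{1,\dots,m\}$, $U_\pi$ is the unitary on $\mathcal{H}^{\otimes m}$ with $U_\pi(X_1\otimes\cdots\otimes X_m)U_\pi^\dagger=X_{\pi(1)}\otimes\cdots\otimes X_{\pi(m)}$; $U_{(j,k)}$ is $U_\pi$ for the transposition of $j,k$. A density operator $\rho$ is in symmetric state consensus (SSC) if $U_\pi\rho U_\pi^\dagger=\rho$ for all $\pi$; $\mathcal{C}_{\rm SSC}$ is the set of such states. A sequence of channels with $\rho(t)=\hat{\mathcal{E}}_t(\rho_0)$ asymptotically achieves SSC if $\lim_t \inf_{\rho\in\mathcal{C}_{\rm SSC}}\|\rho(t)-\rho\|=0$ for all initial states $\rho_0$ (any $p$-norm). It asymptotically achieves $S$-average SSC, for self-adjoint $S$ on $\mathcal{H}^{\otimes m}$, if it asymptotically achieves SSC and there exists a self-adjoint $\sigma$ on $\mathcal{H}$ such that for all initial states $\rho_0$ and all $\ell\in\{1,\dots,m\}$: $\lim_t\mathrm{Tr}(\sigma^{(\ell)}\rho(t))=\lim_t\mathrm{Tr}(S\rho(t))=\mathrm{Tr}(S\rho_0)$. *)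

theory Defs
  imports "HOL-Probability.Probability" "HOL-Probability.Product_PMF"
    "HOL-Combinatorics.Permutations" "HOL-Combinatorics.Transposition"
    "HOL-Library.FuncSet"
begin

text \<open>Coordinates: H = C^n with orthonormal basis indexed by {0..<n}; H^(tensor m) has
  orthonormal basis indexed by tuples a in {0..<m} ->E {0..<n} (site l carries basis index a l).
  Sites are 0-based: {0..<m}.  Operators on H^(tensor m) are represented by their matrix
  entries A a b (a,b tuples), required to vanish outside the index set.\<close>

type_synonym idx = "nat \<Rightarrow> nat"
type_synonym op = "idx \<Rightarrow> idx \<Rightarrow> complex"

definition Idx :: "nat \<Rightarrow> nat \<Rightarrow> idx set" where
  "Idx n m = ({0..<m} \<rightarrow>\<^sub>E {0..<n})"

definition supported :: "nat \<Rightarrow> nat \<Rightarrow> op \<Rightarrow> bool" where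
  "supported n m A \<longleftrightarrow> (\<forall>a b. (a \<notin> Idx n m \<or> b \<notin> Idx n m) \<longrightarrow> A a b = 0)"

definition self_adjoint :: "nat \<Rightarrow> nat \<Rightarrow> op \<Rightarrow> bool" where
  "self_adjoint n m A \<longleftrightarrow> supported n m A \<and> (\<forall>a b. A b a = cnj (A a b))"

definition op_trace :: "nat \<Rightarrow> nat \<Rightarrow> op \<Rightarrow> complex" where
  "op_trace n m A = (\<Sum>a\<in>Idx n m. A a a)"

definition op_mult :: "nat \<Rightarrow> nat \<Rightarrow> op \<Rightarrow> op \<Rightarrow> op" where
  "op_mult n m A B = (\<lambda>a b. if a \<in> Idx n m \<and> b \<in> Idx n m
      then (\<Sum>c\<in>Idx n m. A a c * B c b) else 0)"

definition density_op :: "nat \<Rightarrow> nat \<Rightarrow> op \<Rightarrow> bool" where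
  "density_op n m \<rho> \<longleftrightarrow> self_adjoint n m \<rho> \<and>
     (\<forall>v :: idx \<Rightarrow> complex. let q = (\<Sum>a\<in>Idx n m. \<Sum>b\<in>Idx n m. cnj (v a) * \<rho> a b * v b)
        in Im q = 0 \<and> Re q \<ge> 0) \<and>
     op_trace n m \<rho> = 1"

definition hs_norm :: "nat \<Rightarrow> nat \<Rightarrow> op \<Rightarrow> real" where
  "hs_norm n m A = sqrt (\<Sum>a\<in>Idx n m. \<Sum>b\<in>Idx n m. (cmod (A a b))\<^sup>2)"

text \<open>U_pi A U_pi^dagger, where U_pi (X_1 x ... x X_m) U_pi^dagger = X_(pi 1) x ... x X_(pi m).\<close>
definition permute_op :: "(nat \<Rightarrow> nat) \<Rightarrow> op \<Rightarrow> op" where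
  "permute_op \<pi> A = (\<lambda>a b. A (a \<circ> inv \<pi>) (b \<circ> inv \<pi>))"

definition SSC :: "nat \<Rightarrow> nat \<Rightarrow> op set" where
  "SSC n m = {\<rho>. density_op n m \<rho> \<and> (\<forall>\<pi>. \<pi> permutes {0..<m} \<longrightarrow> permute_op \<pi> \<rho> = \<rho>)}"

definition sym_avg :: "nat \<Rightarrow> op \<Rightarrow> op" where
  "sym_avg m \<rho> = (\<lambda>a b. (\<Sum>\<pi>\<in>{\<pi>. \<pi> permutes {0..<m}}. permute_op \<pi> \<rho> a b) / of_nat (fact m))"

definition local_op :: "nat \<Rightarrow> nat \<Rightarrow> nat \<Rightarrow> (nat \<Rightarrow> nat \<Rightarrow> complex) \<Rightarrow> op" where
  "local_op n m i \<sigma> = (\<lambda>a b. if a \<in> Idx n m \<and> b \<in> Idx n m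
      then \<sigma> (a i) (b i) * (\<Prod>l\<in>{0..<m} - {i}. if a l = b l then 1 else 0) else 0)"

definition hermitian1 :: "nat \<Rightarrow> (nat \<Rightarrow> nat \<Rightarrow> complex) \<Rightarrow> bool" where
  "hermitian1 n \<sigma> \<longleftrightarrow> (\<forall>x<n. \<forall>y<n. \<sigma> y x = cnj (\<sigma> x y))"

text \<open>Connected undirected graph on vertices {0..<m}; an undirected edge is represented by
  (at least) one of its orientations (j,k).\<close>
definition connected_graph :: "nat \<Rightarrow> (nat \<times> nat) set \<Rightarrow> bool" where
  "connected_graph m E \<longleftrightarrow> E \<subseteq> {(j,k). j < m \<and> k < m \<and> j \<noteq> k} \<and>
     (\<forall>u<m. \<forall>v<m. (u,v) \<in> (E \<union> E\<inverse>)\<^sup>*)"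

definition gossip :: "real \<Rightarrow> nat \<times> nat \<Rightarrow> op \<Rightarrow> op" where
  "gossip \<alpha> e \<rho> = (\<lambda>a b. complex_of_real (1 - \<alpha>) * \<rho> a b
      + complex_of_real \<alpha> * permute_op (Transposition.transpose (fst e) (snd e)) \<rho> a b)"

primrec traj :: "real \<Rightarrow> (nat \<Rightarrow> nat \<times> nat) \<Rightarrow> op \<Rightarrow> nat \<Rightarrow> op" where
  "traj \<alpha> es \<rho>0 0 = \<rho>0"
| "traj \<alpha> es \<rho>0 (Suc t) = gossip \<alpha> (es t) (traj \<alpha> es \<rho>0 t)"

primrec exp_traj :: "real \<Rightarrow> (nat \<times> nat) pmf \<Rightarrow> (nat \<times> nat) set \<Rightarrow> op \<Rightarrow> nat \<Rightarrow> op" where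
  "exp_traj \<alpha> Q E \<rho>0 0 = \<rho>0"
| "exp_traj \<alpha> Q E \<rho>0 (Suc t) =
     (\<lambda>a b. \<Sum>e\<in>E. complex_of_real (pmf Q e) * gossip \<alpha> e (exp_traj \<alpha> Q E \<rho>0 t) a b)"

definition periodic_schedule :: "(nat \<times> nat) set \<Rightarrow> (nat \<Rightarrow> nat \<times> nat) \<Rightarrow> bool" where
  "periodic_schedule E es \<longleftrightarrow> (\<forall>t. es t \<in> E) \<and>
     (\<exists>P>0. (\<forall>t. es (t + P) = es t) \<and> E \<subseteq> es ` {..<P})"

definition converges_to :: "nat \<Rightarrow> nat \<Rightarrow> (nat \<Rightarrow> op) \<Rightarrow> op \<Rightarrow> bool" where
  "converges_to n m \<rho> \<sigma> \<longleftrightarrow> (\<lambda>t. hs_norm n m (\<lambda>a b. \<rho> t a b - \<sigma> a b)) \<longlonglongrightarrow> 0"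

text \<open>A sequence of channels is given as the map rho0 |-> trajectory.\<close>
definition achieves_SSC :: "nat \<Rightarrow> nat \<Rightarrow> (op \<Rightarrow> nat \<Rightarrow> op) \<Rightarrow> bool" where
  "achieves_SSC n m F \<longleftrightarrow> (\<forall>\<rho>0. density_op n m \<rho>0 \<longrightarrow>
     (\<lambda>t. INF \<sigma>\<in>SSC n m. hs_norm n m (\<lambda>a b. F \<rho>0 t a b - \<sigma> a b)) \<longlonglongrightarrow> 0)"

definition achieves_S_avg_SSC :: "nat \<Rightarrow> nat \<Rightarrow> (op \<Rightarrow> nat \<Rightarrow> op) \<Rightarrow> op \<Rightarrow> bool" where
  "achieves_S_avg_SSC n m F S \<longleftrightarrow> achieves_SSC n m F \<and>
     (\<exists>\<sigma>. hermitian1 n \<sigma> \<and> (\<forall>\<rho>0. density_op n m \<rho>0 \<longrightarrow> (\<forall>l<m.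
        (\<lambda>t. op_trace n m (op_mult n m (local_op n m l \<sigma>) (F \<rho>0 t)))
            \<longlonglongrightarrow> op_trace n m (op_mult n m S \<rho>0) \<and>
        (\<lambda>t. op_trace n m (op_mult n m S (F \<rho>0 t)))
            \<longlonglongrightarrow> op_trace n m (op_mult n m S \<rho>0))))"

definition is_local_average :: "nat \<Rightarrow> nat \<Rightarrow> op \<Rightarrow> bool" where
  "is_local_average n m S \<longleftrightarrow> (\<exists>\<sigma>. hermitian1 n \<sigma> \<and>
     S = (\<lambda>a b. (\<Sum>i<m. local_op n m i \<sigma> a b) / of_nat m))"

end

theory Submission
  imports Defs
begin

definition NN :: "nat \<Rightarrow> nat \<Rightarrow> op \<Rightarrow> real" where
  "NN n m X = (\<Sum>a\<in>Idx n m. \<Sum>b\<in>Idx n m. (cmod (X a b))\<^sup>2)"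

definition dif :: "op \<Rightarrow> op \<Rightarrow> op" where "dif X Y = (\<lambda>a b. X a b - Y a b)"

definition sw :: "nat \<times> nat \<Rightarrow> nat \<Rightarrow> nat" where "sw e = Transposition.transpose (fst e) (snd e)"

lemma finite_Idx[simp]: "finite (Idx n m)"
  unfolding Idx_def by (simp add: finite_PiE)

lemma NN_nonneg: "NN n m X \<ge> 0"
  unfolding NN_def by (intro sum_nonneg) auto

lemma hs_NN: "hs_norm n m X = sqrt (NN n m X)"
  unfolding hs_norm_def NN_def ..

lemma perm_Idx_in:
  assumes "\<pi> permutes {0..<m}" "a \<in> Idx n m"
  shows "a \<circ> inv \<pi> \<in> Idx n m"
proof -
  have ip: "inv \<pi> permutes {0..<m}" using assms(1) by (rule permutes_inv)
  show ?thesis using assms(2) unfolding Idx_def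
  proof (intro PiE_I)
    fix x assume "x \<in> {0..<m}" "a \<in> {0..<m} \<rightarrow>\<^sub>E {0..<n}"
    then show "(a \<circ> inv \<pi>) x \<in> {0..<n}" using permutes_in_image[OF ip] by auto
  next
    fix x assume "x \<notin> {0..<m}" "a \<in> {0..<m} \<rightarrow>\<^sub>E {0..<n}"
    then show "(a \<circ> inv \<pi>) x = undefined" using permutes_not_in[OF ip] by auto
  qed
qed

lemma perm_Idx_in':
  assumes "\<pi> permutes {0..<m}" "a \<in> Idx n m"
  shows "a \<circ> \<pi> \<in> Idx n m"
proof -
  have "inv \<pi> permutes {0..<m}" using assms(1) by (rule permutes_inv)
  from perm_Idx_in[OF this assms(2)] show ?thesis
    using assms(1) by (simp add: permutes_inv_inv)
qed

lemma perm_Idx_bij: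
  assumes "\<pi> permutes {0..<m}"
  shows "bij_betw (\<lambda>a. a \<circ> inv \<pi>) (Idx n m) (Idx n m)"
proof (rule bij_betw_byWitness[where f'="\<lambda>a. a \<circ> \<pi>"])
  show "\<forall>a\<in>Idx n m. a \<circ> inv \<pi> \<circ> \<pi> = a"
    using permutes_inv_o(2)[OF assms] by (simp add: o_assoc[symmetric])
  show "\<forall>a\<in>Idx n m. a \<circ> \<pi> \<circ> inv \<pi> = a"
    using permutes_inv_o(1)[OF assms] by (simp add: o_assoc[symmetric])
  show "(\<lambda>a. a \<circ> inv \<pi>) ` Idx n m \<subseteq> Idx n m" using perm_Idx_in[OF assms] by auto
  show "(\<lambda>a. a \<circ> \<pi>) ` Idx n m \<subseteq> Idx n m" using perm_Idx_in'[OF assms] by auto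
qed

lemma sum_Idx_perm:
  assumes "\<pi> permutes {0..<m}"
  shows "(\<Sum>a\<in>Idx n m. f (a \<circ> inv \<pi>)) = (\<Sum>a\<in>Idx n m. f a)"
  using sum.reindex_bij_betw[OF perm_Idx_bij[OF assms], of f] .

lemma NN_perm:
  assumes "\<pi> permutes {0..<m}"
  shows "NN n m (permute_op \<pi> X) = NN n m X"
proof -
  have "NN n m (permute_op \<pi> X) = (\<Sum>a\<in>Idx n m. \<Sum>b\<in>Idx n m. (cmod (X (a \<circ> inv \<pi>) (b \<circ> inv \<pi>)))\<^sup>2)"
    unfolding NN_def permute_op_def ..
  also have "\<dots> = (\<Sum>a\<in>Idx n m. \<Sum>b\<in>Idx n m. (cmod (X (a \<circ> inv \<pi>) b))\<^sup>2)"
    by (intro sum.cong refl sum_Idx_perm[OF assms])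
  also have "\<dots> = (\<Sum>a\<in>Idx n m. \<Sum>b\<in>Idx n m. (cmod (X a b))\<^sup>2)"
    by (rule sum_Idx_perm[OF assms, where f="\<lambda>a. \<Sum>b\<in>Idx n m. (cmod (X a b))\<^sup>2"])
  finally show ?thesis unfolding NN_def .
qed

lemma permute_op_comp:
  assumes "\<pi> permutes S" "\<sigma> permutes S"
  shows "permute_op \<pi> (permute_op \<sigma> A) = permute_op (\<sigma> \<circ> \<pi>) A"
  using o_inv_distrib[OF permutes_bij[OF assms(2)] permutes_bij[OF assms(1)]]
  unfolding permute_op_def by (simp add: o_assoc)

lemma permute_op_id[simp]: "permute_op id A = A"
  unfolding permute_op_def by simp

lemma sw_permutes: "fst e < m \<Longrightarrow> snd e < m \<Longrightarrow> sw e permutes {0..<m}"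
  unfolding sw_def by (rule permutes_swap_id) auto

definition Gm :: "nat \<Rightarrow> (nat \<Rightarrow> nat) set" where "Gm m = {\<pi>. \<pi> permutes {0..<m}}"

lemma finite_Gm[simp]: "finite (Gm m)"
  unfolding Gm_def by (rule finite_permutations) simp

lemma card_Gm: "card (Gm m) = fact m"
  unfolding Gm_def by (rule card_permutations) auto

lemma sym_avg_pt: "sym_avg m X a b = (\<Sum>\<pi>\<in>Gm m. X (a \<circ> inv \<pi>) (b \<circ> inv \<pi>)) / of_nat (fact m)"
  unfolding sym_avg_def Gm_def permute_op_def ..

lemma bij_right: "\<sigma> permutes {0..<m} \<Longrightarrow> bij_betw (\<lambda>\<pi>. \<pi> \<circ> \<sigma>) (Gm m) (Gm m)"
  apply (rule bij_betw_byWitness[where f'="\<lambda>\<pi>. \<pi> \<circ> inv \<sigma>"])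
  by (auto simp: Gm_def o_assoc[symmetric] permutes_inv_o permutes_compose permutes_inv)

lemma bij_left: "\<sigma> permutes {0..<m} \<Longrightarrow> bij_betw (\<lambda>\<pi>. \<sigma> \<circ> \<pi>) (Gm m) (Gm m)"
  apply (rule bij_betw_byWitness[where f'="\<lambda>\<pi>. inv \<sigma> \<circ> \<pi>"])
  by (auto simp: Gm_def o_assoc permutes_inv_o permutes_compose permutes_inv)

lemma sym_avg_alt: "sym_avg m X = (\<lambda>a b. (\<Sum>\<pi>\<in>Gm m. permute_op \<pi> X a b) / of_nat (fact m))"
  unfolding sym_avg_def Gm_def ..

lemma perm_sym_avg:
  assumes "\<sigma> permutes {0..<m}"
  shows "permute_op \<sigma> (sym_avg m X) = sym_avg m X"
proof (rule ext, rule ext)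
  fix a b
  have "permute_op \<sigma> (sym_avg m X) a b = (\<Sum>\<pi>\<in>Gm m. permute_op \<sigma> (permute_op \<pi> X) a b) / of_nat (fact m)"
    unfolding sym_avg_alt by (simp add: permute_op_def)
  also have "\<dots> = (\<Sum>\<pi>\<in>Gm m. permute_op (\<pi> \<circ> \<sigma>) X a b) / of_nat (fact m)"
    using permute_op_comp[OF assms] by (simp add: Gm_def)
  also have "(\<Sum>\<pi>\<in>Gm m. permute_op (\<pi> \<circ> \<sigma>) X a b) = (\<Sum>\<pi>\<in>Gm m. permute_op \<pi> X a b)"
    using sum.reindex_bij_betw[OF bij_right[OF assms], of "\<lambda>\<pi>. permute_op \<pi> X a b"] by simp
  finally show "permute_op \<sigma> (sym_avg m X) a b = sym_avg m X a b" unfolding sym_avg_alt by simp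
qed

lemma sym_avg_perm:
  assumes "\<sigma> permutes {0..<m}"
  shows "sym_avg m (permute_op \<sigma> X) = sym_avg m X"
proof (rule ext, rule ext)
  fix a b
  have "sym_avg m (permute_op \<sigma> X) a b = (\<Sum>\<pi>\<in>Gm m. permute_op \<pi> (permute_op \<sigma> X) a b) / of_nat (fact m)"
    unfolding sym_avg_alt ..
  also have "\<dots> = (\<Sum>\<pi>\<in>Gm m. permute_op (\<sigma> \<circ> \<pi>) X a b) / of_nat (fact m)"
    using permute_op_comp[OF _ assms] by (simp add: Gm_def)
  also have "(\<Sum>\<pi>\<in>Gm m. permute_op (\<sigma> \<circ> \<pi>) X a b) = (\<Sum>\<pi>\<in>Gm m. permute_op \<pi> X a b)"
    using sum.reindex_bij_betw[OF bij_left[OF assms], of "\<lambda>\<pi>. permute_op \<pi> X a b"] by simp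
  finally show "sym_avg m (permute_op \<sigma> X) a b = sym_avg m X a b" unfolding sym_avg_alt by simp
qed

lemma sym_avg_idem: "sym_avg m (sym_avg m X) = sym_avg m X"
proof (rule ext, rule ext)
  fix a b
  have "sym_avg m (sym_avg m X) a b = (\<Sum>\<pi>\<in>Gm m. sym_avg m X a b) / of_nat (fact m)"
    unfolding sym_avg_alt[of m "sym_avg m X"]
    using perm_sym_avg[of _ m X] by (simp add: Gm_def)
  also have "\<dots> = sym_avg m X a b" by (simp add: card_Gm)
  finally show "sym_avg m (sym_avg m X) a b = sym_avg m X a b" .
qed

lemma sym_avg_lin:
  "sym_avg m (\<lambda>a b. c * X a b + d * Y a b) = (\<lambda>a b. c * sym_avg m X a b + d * sym_avg m Y a b)"
  unfolding sym_avg_pt by (simp add: sum.distrib sum_distrib_left add_divide_distrib)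

lemma sym_avg_dif: "sym_avg m (dif X Y) = dif (sym_avg m X) (sym_avg m Y)"
  unfolding sym_avg_pt dif_def by (simp add: sum_subtractf diff_divide_distrib)

lemma sym_avg_sum:
  "sym_avg m (\<lambda>a b. \<Sum>e\<in>A. c e * Y e a b) = (\<lambda>a b. \<Sum>e\<in>A. c e * sym_avg m (Y e) a b)"
  unfolding sym_avg_pt by (simp add: sum_distrib_left sum_divide_distrib sum.swap[of _ A] mult.commute)

lemma sym_avg_gossip:
  assumes "fst e < m" "snd e < m"
  shows "sym_avg m (gossip \<alpha> e X) = sym_avg m X"
proof -
  have "sym_avg m (gossip \<alpha> e X) = (\<lambda>a b. complex_of_real (1-\<alpha>) * sym_avg m X a b +
      complex_of_real \<alpha> * sym_avg m (permute_op (sw e) X) a b)"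
    unfolding gossip_def sw_def[symmetric] by (rule sym_avg_lin)
  also have "\<dots> = sym_avg m X"
    using sym_avg_perm[OF sw_permutes[OF assms]] by (simp add: algebra_simps flip: of_real_add)
  finally show ?thesis .
qed

lemma cmod_conv_id:
  fixes x y :: complex and \<alpha> :: real
  shows "(cmod (complex_of_real (1-\<alpha>) * x + complex_of_real \<alpha> * y))\<^sup>2 =
     (1-\<alpha>) * (cmod x)\<^sup>2 + \<alpha> * (cmod y)\<^sup>2 - \<alpha> * (1-\<alpha>) * (cmod (x - y))\<^sup>2"
  by (simp only: cmod_power2) (simp add: power2_eq_square algebra_simps)

lemma NN_gossip:
  assumes "fst e < m" "snd e < m"
  shows "NN n m (gossip \<alpha> e X) = NN n m X - \<alpha> * (1-\<alpha>) * NN n m (dif X (permute_op (sw e) X))"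
proof -
  have "NN n m (gossip \<alpha> e X) = (1-\<alpha>) * NN n m X + \<alpha> * NN n m (permute_op (sw e) X)
       - \<alpha> * (1-\<alpha>) * NN n m (dif X (permute_op (sw e) X))"
    unfolding NN_def gossip_def dif_def sw_def cmod_conv_id
    by (simp add: sum_subtractf sum.distrib sum_distrib_left)
  then show ?thesis using NN_perm[OF sw_permutes[OF assms]] by (simp add: algebra_simps)
qed

lemma NN_add2: "NN n m (\<lambda>a b. X a b + Y a b) \<le> 2 * NN n m X + 2 * NN n m Y"
proof -
  have "\<And>x y::complex. (cmod (x + y))\<^sup>2 \<le> 2 * (cmod x)\<^sup>2 + 2 * (cmod y)\<^sup>2"
  proof -
    fix x y :: complex
    have "(cmod (x + y))\<^sup>2 \<le> (cmod x + cmod y)\<^sup>2"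
      by (intro power_mono norm_triangle_ineq) auto
    also have "\<dots> \<le> 2 * (cmod x)\<^sup>2 + 2 * (cmod y)\<^sup>2"
      using zero_le_power2[of "cmod x - cmod y"] by (simp add: power2_eq_square algebra_simps)
    finally show "(cmod (x + y))\<^sup>2 \<le> 2 * (cmod x)\<^sup>2 + 2 * (cmod y)\<^sup>2" .
  qed
  then show ?thesis unfolding NN_def
    by (simp add: sum_distrib_left flip: sum.distrib) (intro sum_mono, auto)
qed

lemma jensen_sq:
  fixes q x :: "'i \<Rightarrow> real"
  assumes "finite A" "\<And>i. i \<in> A \<Longrightarrow> q i \<ge> 0" "(\<Sum>i\<in>A. q i) = 1"
  shows "(\<Sum>i\<in>A. q i * x i)\<^sup>2 \<le> (\<Sum>i\<in>A. q i * (x i)\<^sup>2)"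
proof -
  define \<mu> where "\<mu> = (\<Sum>i\<in>A. q i * x i)"
  have "0 \<le> (\<Sum>i\<in>A. q i * (x i - \<mu>)\<^sup>2)"
    using assms(2) by (intro sum_nonneg) auto
  also have "\<dots> = (\<Sum>i\<in>A. q i * (x i)\<^sup>2) - 2 * \<mu> * (\<Sum>i\<in>A. q i * x i) + \<mu>\<^sup>2 * (\<Sum>i\<in>A. q i)"
    by (simp add: power2_eq_square algebra_simps sum.distrib sum_subtractf sum_distrib_left)
  finally show ?thesis using assms(3) unfolding \<mu>_def by (simp add: power2_eq_square)
qed

lemma jensen_cmod:
  fixes q :: "'i \<Rightarrow> real" and z :: "'i \<Rightarrow> complex"
  assumes "finite A" "\<And>i. i \<in> A \<Longrightarrow> q i \<ge> 0" "(\<Sum>i\<in>A. q i) = 1"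
  shows "(cmod (\<Sum>i\<in>A. complex_of_real (q i) * z i))\<^sup>2 \<le> (\<Sum>i\<in>A. q i * (cmod (z i))\<^sup>2)"
proof -
  have "cmod (\<Sum>i\<in>A. complex_of_real (q i) * z i) \<le> (\<Sum>i\<in>A. cmod (complex_of_real (q i) * z i))"
    by (rule norm_sum)
  also have "\<dots> = (\<Sum>i\<in>A. q i * cmod (z i))"
    using assms(2) by (intro sum.cong) (auto simp: norm_mult)
  finally have "(cmod (\<Sum>i\<in>A. complex_of_real (q i) * z i))\<^sup>2 \<le> (\<Sum>i\<in>A. q i * cmod (z i))\<^sup>2"
    by (intro power_mono) auto
  also have "\<dots> \<le> (\<Sum>i\<in>A. q i * (cmod (z i))\<^sup>2)" by (rule jensen_sq[OF assms])
  finally show ?thesis .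
qed

lemma NN_convex:
  fixes q :: "'i \<Rightarrow> real"
  assumes "finite A" "\<And>i. i \<in> A \<Longrightarrow> q i \<ge> 0" "(\<Sum>i\<in>A. q i) = 1"
  shows "NN n m (\<lambda>a b. \<Sum>i\<in>A. complex_of_real (q i) * Z i a b) \<le> (\<Sum>i\<in>A. q i * NN n m (Z i))"
proof -
  have "NN n m (\<lambda>a b. \<Sum>i\<in>A. complex_of_real (q i) * Z i a b) \<le>
      (\<Sum>a\<in>Idx n m. \<Sum>b\<in>Idx n m. \<Sum>i\<in>A. q i * (cmod (Z i a b))\<^sup>2)"
    unfolding NN_def by (intro sum_mono jensen_cmod[OF assms])
  also have "\<dots> = (\<Sum>i\<in>A. q i * NN n m (Z i))"
    unfolding NN_def by (simp add: sum_distrib_left sum.swap[of _ A])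
  finally show ?thesis .
qed

lemma gossip_dif:
  assumes "permute_op (sw e) Y = Y"
  shows "gossip \<alpha> e (dif X Y) = dif (gossip \<alpha> e X) Y"
proof (rule ext, rule ext)
  fix a b
  have "permute_op (sw e) (dif X Y) = dif (permute_op (sw e) X) Y"
    using assms unfolding permute_op_def dif_def by (metis (no_types))
  then have h: "permute_op (sw e) (dif X Y) a b = permute_op (sw e) X a b - Y a b"
    by (simp add: dif_def)
  show "gossip \<alpha> e (dif X Y) a b = dif (gossip \<alpha> e X) Y a b"
    unfolding gossip_def sw_def[symmetric] h by (simp add: dif_def algebra_simps of_real_diff)
qed

definition DD :: "nat \<Rightarrow> nat \<Rightarrow> (nat \<times> nat) set \<Rightarrow> op \<Rightarrow> real" where
  "DD n m E X = (\<Sum>e\<in>E. NN n m (dif X (permute_op (sw e) X)))"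

lemma DD_nonneg: "DD n m E X \<ge> 0"
  unfolding DD_def by (intro sum_nonneg NN_nonneg)

lemma perm_dif: "permute_op \<pi> (dif A B) = dif (permute_op \<pi> A) (permute_op \<pi> B)"
  unfolding permute_op_def dif_def ..

lemma comp_bound:
  assumes "\<pi> permutes {0..<m}" "\<sigma> permutes {0..<m}"
    and "\<And>X. NN n m (dif X (permute_op \<pi> X)) \<le> K1 * DD n m E X"
    and "\<And>X. NN n m (dif X (permute_op \<sigma> X)) \<le> K2 * DD n m E X"
  shows "NN n m (dif X (permute_op (\<sigma> \<circ> \<pi>) X)) \<le> (2*K1 + 2*K2) * DD n m E X"
proof -
  have "dif X (permute_op (\<sigma> \<circ> \<pi>) X) = (\<lambda>a b. dif X (permute_op \<pi> X) a b +
        permute_op \<pi> (dif X (permute_op \<sigma> X)) a b)"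
    unfolding permute_op_comp[OF assms(1,2), symmetric] perm_dif by (simp add: dif_def fun_eq_iff)
  then have "NN n m (dif X (permute_op (\<sigma> \<circ> \<pi>) X)) \<le>
      2 * NN n m (dif X (permute_op \<pi> X)) + 2 * NN n m (permute_op \<pi> (dif X (permute_op \<sigma> X)))"
    using NN_add2 by metis
  also have "\<dots> = 2 * NN n m (dif X (permute_op \<pi> X)) + 2 * NN n m (dif X (permute_op \<sigma> X))"
    using NN_perm[OF assms(1)] by simp
  also have "\<dots> \<le> 2 * (K1 * DD n m E X) + 2 * (K2 * DD n m E X)"
    using assms(3,4) by (intro add_mono mult_left_mono) auto
  finally show ?thesis by (simp add: algebra_simps)
qed

lemma permute_op_id'[simp]: "permute_op (\<lambda>a. a) A = A"
  unfolding permute_op_def by (simp add: inv_id[unfolded id_def] o_def)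

lemma NN_dif_self: "NN n m (dif X X) = 0"
  unfolding NN_def dif_def by simp

lemma edge_bound:
  assumes "finite E" "e \<in> E"
  shows "NN n m (dif X (permute_op (sw e) X)) \<le> 1 * DD n m E X"
  unfolding DD_def using member_le_sum[OF assms(2), of "\<lambda>e. NN n m (dif X (permute_op (sw e) X))"]
    NN_nonneg assms(1) by simp

lemma transp_bound:
  assumes "connected_graph m E" "finite E" "u < m" "(u, v) \<in> (E \<union> E\<inverse>)\<^sup>*"
  shows "v < m \<and> (\<exists>K. \<forall>X. NN n m (dif X (permute_op (Transposition.transpose u v) X)) \<le> K * DD n m E X)"
  using assms(4)
proof (induction v rule: rtrancl_induct)
  case base
  then show ?case using assms(3) by (auto simp: NN_dif_self intro!: exI[of _ 0])
next
  case (step w v)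
  have Esub: "E \<subseteq> {(j,k). j < m \<and> k < m \<and> j \<noteq> k}" using assms(1) unfolding connected_graph_def by simp
  from step.hyps(2) obtain e where e: "e \<in> E" "sw e = Transposition.transpose w v"
    by (auto simp: sw_def transpose_commute)
  have wv: "w < m" "v < m" using e(1) step.hyps(2) Esub by auto
  have eb: "\<forall>X. NN n m (dif X (permute_op (Transposition.transpose w v) X)) \<le> 1 * DD n m E X"
    using edge_bound[OF assms(2) e(1)] e(2) by metis
  from step.IH obtain K where K: "\<forall>X. NN n m (dif X (permute_op (Transposition.transpose u w) X)) \<le> K * DD n m E X"
    by blast
  have pw: "Transposition.transpose w v permutes {0..<m}" "Transposition.transpose u w permutes {0..<m}"
    using wv assms(3) by (auto intro!: permutes_swap_id)
  consider "v = u" | "w = u" | "w = v" | "u \<noteq> v" "w \<noteq> u" "w \<noteq> v" by blast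
  then have "\<exists>K. \<forall>X. NN n m (dif X (permute_op (Transposition.transpose u v) X)) \<le> K * DD n m E X"
  proof cases
    case 1 then show ?thesis by (auto simp: NN_dif_self intro!: exI[of _ 0])
  next
    case 2 then show ?thesis using eb by blast
  next
    case 3 then show ?thesis using K by blast
  next
    case 4
    have eq: "Transposition.transpose u v =
        Transposition.transpose w v \<circ> (Transposition.transpose u w \<circ> Transposition.transpose w v)"
      using 4 by (auto simp: fun_eq_iff Transposition.transpose_def)
    have c1: "\<And>X. NN n m (dif X (permute_op (Transposition.transpose u w \<circ> Transposition.transpose w v) X))
        \<le> (2*1 + 2*K) * DD n m E X"
      by (rule comp_bound[OF pw(1) pw(2)]) (use eb K in auto)
    have "\<And>X. NN n m (dif X (permute_op (Transposition.transpose w v \<circ> (Transposition.transpose u w \<circ> Transposition.transpose w v)) X))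
        \<le> (2*(2*1 + 2*K) + 2*1) * DD n m E X"
      by (rule comp_bound[OF permutes_compose[OF pw(1) pw(2)] pw(1)]) (use c1 eb in auto)
    then show ?thesis unfolding eq[symmetric] by blast
  qed
  then show ?case using wv by blast
qed

lemma perm_bound:
  assumes "connected_graph m E" "finite E" "\<pi> permutes {0..<m}"
  shows "\<exists>K. \<forall>X. NN n m (dif X (permute_op \<pi> X)) \<le> K * DD n m E X"
  using assms(3) finite_atLeastLessThan
proof (induction rule: permutes_induct)
  case id
  then show ?case by (auto simp: NN_dif_self intro!: exI[of _ 0])
next
  case (swap a b p)
  from swap.IH obtain K1 where K1: "\<forall>X. NN n m (dif X (permute_op p X)) \<le> K1 * DD n m E X" by blast
  have "(a, b) \<in> (E \<union> E\<inverse>)\<^sup>*" using assms(1) swap.hyps(1,2) unfolding connected_graph_def by auto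
  from transp_bound[OF assms(1,2) _ this] swap.hyps(1) obtain K2 where
    K2: "\<forall>X. NN n m (dif X (permute_op (Transposition.transpose a b) X)) \<le> K2 * DD n m E X" by auto
  have "\<And>X. NN n m (dif X (permute_op (Transposition.transpose a b \<circ> p) X)) \<le> (2*K1 + 2*K2) * DD n m E X"
    by (rule comp_bound[OF swap.hyps(4) permutes_swap_id[OF swap.hyps(1,2)]]) (use K1 K2 in auto)
  then show ?case by blast
qed

lemma poincare:
  assumes "connected_graph m E" "finite E"
  shows "\<exists>K. \<forall>X. sym_avg m X = (\<lambda>a b. 0) \<longrightarrow> NN n m X \<le> K * DD n m E X"
proof -
  have "\<forall>\<pi>\<in>Gm m. \<exists>K. \<forall>X. NN n m (dif X (permute_op \<pi> X)) \<le> K * DD n m E X"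
    using perm_bound[OF assms] by (auto simp: Gm_def)
  then obtain Kf where Kf: "\<And>\<pi> X. \<pi> \<in> Gm m \<Longrightarrow> NN n m (dif X (permute_op \<pi> X)) \<le> Kf \<pi> * DD n m E X"
    by metis
  define c where "c = 1 / real (fact m)"
  have fpos: "real (fact m) > 0" by simp
  have csum: "(\<Sum>\<pi>\<in>Gm m. c) = 1" unfolding c_def using card_Gm[of m] by simp
  have "NN n m X \<le> (\<Sum>\<pi>\<in>Gm m. c * Kf \<pi>) * DD n m E X" if X: "sym_avg m X = (\<lambda>a b. 0)" for X
  proof -
    have "X = (\<lambda>a b. \<Sum>\<pi>\<in>Gm m. complex_of_real c * dif X (permute_op \<pi> X) a b)"
    proof (rule ext, rule ext)
      fix a b
      have "sym_avg m X a b = 0" using X by simp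
      then have "(\<Sum>\<pi>\<in>Gm m. permute_op \<pi> X a b) = 0"
        unfolding sym_avg_alt by simp
      moreover have "(\<Sum>\<pi>\<in>Gm m. complex_of_real c * dif X (permute_op \<pi> X) a b) =
          complex_of_real c * (of_nat (card (Gm m)) * X a b - (\<Sum>\<pi>\<in>Gm m. permute_op \<pi> X a b))"
        by (simp add: dif_def sum_subtractf sum_distrib_left algebra_simps)
      ultimately show "X a b = (\<Sum>\<pi>\<in>Gm m. complex_of_real c * dif X (permute_op \<pi> X) a b)"
        unfolding c_def card_Gm using fpos by simp
    qed
    then have "NN n m X = NN n m (\<lambda>a b. \<Sum>\<pi>\<in>Gm m. complex_of_real c * dif X (permute_op \<pi> X) a b)"
      by simp
    also have "\<dots> \<le> (\<Sum>\<pi>\<in>Gm m. c * NN n m (dif X (permute_op \<pi> X)))"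
      by (rule NN_convex) (use csum in \<open>auto simp: c_def\<close>)
    also have "\<dots> \<le> (\<Sum>\<pi>\<in>Gm m. c * (Kf \<pi> * DD n m E X))"
      by (intro sum_mono mult_left_mono Kf) (auto simp: c_def)
    also have "\<dots> = (\<Sum>\<pi>\<in>Gm m. c * Kf \<pi>) * DD n m E X"
      by (simp add: sum_distrib_right mult.assoc)
    finally show ?thesis .
  qed
  then show ?thesis by blast
qed

lemma NN_scale: "NN n m (\<lambda>a b. c * Z a b) = (cmod c)\<^sup>2 * NN n m Z"
  unfolding NN_def by (simp add: norm_mult power_mult_distrib sum_distrib_left)

lemma NN_zero[simp]: "NN n m (\<lambda>a b. 0) = 0"
  unfolding NN_def by simp

lemma NN_sum_le:
  assumes "finite A"
  shows "NN n m (\<lambda>a b. \<Sum>i\<in>A. Z i a b) \<le> real (card A) * (\<Sum>i\<in>A. NN n m (Z i))"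
proof (cases "A = {}")
  case True then show ?thesis by simp
next
  case False
  define c where "c = real (card A)"
  have cpos: "c > 0" using False assms unfolding c_def by (simp add: card_gt_0_iff)
  have "NN n m (\<lambda>a b. \<Sum>i\<in>A. Z i a b) =
      NN n m (\<lambda>a b. \<Sum>i\<in>A. complex_of_real (1/c) * (complex_of_real c * Z i a b))"
    using cpos by simp
  also have "\<dots> \<le> (\<Sum>i\<in>A. (1/c) * NN n m (\<lambda>a b. complex_of_real c * Z i a b))"
    by (rule NN_convex) (use assms cpos in \<open>auto simp: c_def\<close>)
  also have "\<dots> = (\<Sum>i\<in>A. c * NN n m (Z i))"
    unfolding NN_scale using cpos by (simp add: power2_eq_square)
  finally show ?thesis unfolding c_def by (simp add: sum_distrib_left)
qed

lemma NN_neg_dif: "NN n m (dif X Y) = NN n m (dif Y X)"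
  unfolding NN_def dif_def by (simp add: norm_minus_commute)

lemma NN_add3: "NN n m (\<lambda>a b. X a b + Y a b + W a b) \<le> 2 * NN n m X + 4 * NN n m Y + 4 * NN n m W"
proof -
  have "NN n m (\<lambda>a b. X a b + (Y a b + W a b)) \<le> 2 * NN n m X + 2 * NN n m (\<lambda>a b. Y a b + W a b)"
    by (rule NN_add2)
  also have "\<dots> \<le> 2 * NN n m X + 2 * (2 * NN n m Y + 2 * NN n m W)"
    using NN_add2[of n m Y W] by simp
  finally show ?thesis by (simp add: add.assoc)
qed

lemma es_mod:
  fixes es :: "nat \<Rightarrow> 'b" and P :: nat
  assumes "\<forall>t. es (t + P) = es t"
  shows "es x = es (x mod P)"
proof -
  have "es (y + k * P) = es y" for y k
  proof (induction k)
    case (Suc k)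
    have "y + Suc k * P = (y + k * P) + P" by simp
    then show ?case using assms Suc by metis
  qed simp
  then show ?thesis by (metis mod_div_mult_eq)
qed

lemma edge_Esub: "connected_graph m E \<Longrightarrow> e \<in> E \<Longrightarrow> fst e < m \<and> snd e < m"
  unfolding connected_graph_def by auto

lemma limit_from_decay:
  fixes f :: "nat \<Rightarrow> real"
  assumes "\<And>t. 0 \<le> f t" "\<And>t. f t \<le> r ^ (t div P) * f 0" "0 \<le> r" "r < 1" "P > 0"
  shows "f \<longlonglongrightarrow> 0"
proof -
  have "(\<lambda>t. r ^ (t div P)) \<longlonglongrightarrow> 0"
    by (rule filterlim_compose[OF LIMSEQ_power_zero filterlim_at_top_div_const_nat])
       (use assms in auto)
  then have "(\<lambda>t. r ^ (t div P) * f 0) \<longlonglongrightarrow> 0"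
    using tendsto_mult_left_zero by blast
  then show ?thesis
    by (rule tendsto_sandwich[rotated 2, OF tendsto_const]) (use assms in auto)
qed

lemma periodic_decay:
  assumes conn: "connected_graph m E" and finE: "finite E" and \<alpha>: "0 < \<alpha>" "\<alpha> < 1"
    and es: "\<forall>t. es t \<in> E" and P: "P > 0" "\<forall>t. es (t + P) = es t" "E \<subseteq> es ` {..<P}"
    and X: "\<forall>t. X (Suc t) = gossip \<alpha> (es t) (X t)" and sym: "\<forall>t. sym_avg m (X t) = (\<lambda>a b. 0)"
  shows "(\<lambda>t. NN n m (X t)) \<longlonglongrightarrow> 0"
proof -
  define c0 where "c0 = \<alpha> * (1 - \<alpha>)"
  have c0: "c0 > 0" "c0 \<le> 1" using \<alpha> unfolding c0_def by (auto intro: mult_le_one)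
  define d where "d s = NN n m (dif (X s) (permute_op (sw (es s)) (X s)))" for s
  have dnn: "d s \<ge> 0" for s unfolding d_def by (rule NN_nonneg)
  have stepN: "NN n m (X (Suc s)) = NN n m (X s) - c0 * d s" for s
    using X NN_gossip[OF conjunct1[OF edge_Esub[OF conn es[rule_format]]] conjunct2[OF edge_Esub[OF conn es[rule_format]]]]
    unfolding d_def c0_def by simp
  have mono: "NN n m (X (Suc s)) \<le> NN n m (X s)" for s
    using stepN[of s] c0 dnn[of s] by (simp add: mult_nonneg_nonneg)
  have monok: "NN n m (X (s + k)) \<le> NN n m (X s)" for s k
    by (induction k) (use mono order_trans in auto)
  have tele: "NN n m (X t) - NN n m (X (t + k)) = c0 * (\<Sum>i<k. d (t + i))" for t k
    by (induction k) (auto simp: stepN algebra_simps)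
  obtain K where K: "\<And>Y. sym_avg m Y = (\<lambda>a b. 0) \<Longrightarrow> NN n m Y \<le> K * DD n m E Y"
    using poincare[OF conn finE, of n] by blast
  have difrep: "dif (X t) (X (t + j)) = (\<lambda>a b. \<Sum>i<j. complex_of_real \<alpha> * dif (X (t+i)) (permute_op (sw (es (t+i))) (X (t+i))) a b)" for t j
  proof (induction j)
    case 0 then show ?case by (simp add: dif_def fun_eq_iff)
  next
    case (Suc j)
    have "X (t + Suc j) = gossip \<alpha> (es (t+j)) (X (t+j))" using X by simp
    then show ?case using Suc
      by (auto simp: fun_eq_iff dif_def gossip_def sw_def algebra_simps of_real_diff)
  qed
  have key: "NN n m (X t) \<le> (\<bar>K\<bar> * real (card E) * (6 * real P + 4) / c0 + 1) * (NN n m (X t) - NN n m (X (t + P)))" for t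
  proof -
    define S where "S = (\<Sum>i<P. d (t + i))"
    have Snn: "S \<ge> 0" unfolding S_def using dnn by (simp add: sum_nonneg)
    have NNdif: "NN n m (dif (X t) (X (t + j))) \<le> real P * S" if "j \<le> P" for j
    proof -
      have "NN n m (dif (X t) (X (t + j))) \<le> real (card {..<j}) *
          (\<Sum>i<j. NN n m (\<lambda>a b. complex_of_real \<alpha> * dif (X (t+i)) (permute_op (sw (es (t+i))) (X (t+i))) a b))"
        unfolding difrep by (rule NN_sum_le) simp
      also have "\<dots> = real j * (\<Sum>i<j. \<alpha>\<^sup>2 * d (t + i))"
        unfolding NN_scale d_def using \<alpha> by simp
      also have "\<dots> \<le> real P * (\<Sum>i<P. d (t + i))"
      proof (intro mult_mono)
        show "real j \<le> real P" using that by simp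
        have "(\<Sum>i<j. \<alpha>\<^sup>2 * d (t + i)) \<le> (\<Sum>i<j. d (t + i))"
          using \<alpha> dnn by (intro sum_mono) (auto intro!: mult_left_le_one_le simp: power_le_one)
        also have "\<dots> \<le> (\<Sum>i<P. d (t + i))"
          using that dnn by (intro sum_mono2) auto
        finally show "(\<Sum>i<j. \<alpha>\<^sup>2 * d (t + i)) \<le> (\<Sum>i<P. d (t + i))" .
      qed (use dnn in \<open>auto intro: sum_nonneg\<close>)
      finally show ?thesis unfolding S_def .
    qed
    have eb: "NN n m (dif (X t) (permute_op (sw e) (X t))) \<le> (6 * real P + 4) * S" if e: "e \<in> E" for e
    proof -
      obtain i where i: "i < P" "es i = e" using P(3) e by auto
      define j where "j = (i + P - t mod P) mod P"
      have jP: "j < P" unfolding j_def using P by simp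
      have "(t + j) mod P = i"
      proof -
        have "(t + j) mod P = (t mod P + (i + P - t mod P)) mod P"
          unfolding j_def by (metis mod_add_left_eq mod_add_right_eq)
        also have "t mod P + (i + P - t mod P) = i + P"
          using mod_less_divisor[OF P(1), of t] by linarith
        finally show ?thesis using i by simp
      qed
      then have ej: "es (t + j) = e" using es_mod[OF P(2), of "t+j"] i by simp
      define Y where "Y = X (t + j)"
      have split: "dif (X t) (permute_op (sw e) (X t)) = (\<lambda>a b. dif (X t) Y a b +
          dif Y (permute_op (sw e) Y) a b + permute_op (sw e) (dif Y (X t)) a b)"
        by (simp add: fun_eq_iff dif_def permute_op_def)
      have pe: "sw e permutes {0..<m}" using edge_Esub[OF conn e] by (intro sw_permutes) auto
      have "NN n m (dif (X t) (permute_op (sw e) (X t))) \<le>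
          2 * NN n m (dif (X t) Y) + 4 * NN n m (dif Y (permute_op (sw e) Y)) + 4 * NN n m (permute_op (sw e) (dif Y (X t)))"
        unfolding split by (rule NN_add3)
      also have "NN n m (permute_op (sw e) (dif Y (X t))) = NN n m (dif (X t) Y)"
        using NN_perm[OF pe] NN_neg_dif by metis
      also have "NN n m (dif Y (permute_op (sw e) Y)) = d (t + j)"
        unfolding d_def Y_def ej ..
      also have "d (t + j) \<le> S" unfolding S_def
        using member_le_sum[of j "{..<P}" "\<lambda>i. d (t+i)"] jP dnn by auto
      finally show ?thesis using NNdif[of j] jP unfolding Y_def by (simp add: algebra_simps)
    qed
    have "NN n m (X t) \<le> K * DD n m E (X t)" using K sym by blast
    also have "\<dots> \<le> \<bar>K\<bar> * DD n m E (X t)" using DD_nonneg by (intro mult_right_mono) auto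
    also have "DD n m E (X t) \<le> (\<Sum>e\<in>E. (6 * real P + 4) * S)"
      unfolding DD_def by (intro sum_mono eb)
    also have "(\<Sum>e\<in>E. (6 * real P + 4) * S) = real (card E) * (6 * real P + 4) * S" by simp
    also have "S = (NN n m (X t) - NN n m (X (t + P))) / c0" unfolding S_def tele using c0 by simp
    finally have *: "NN n m (X t) \<le> \<bar>K\<bar> * (real (card E) * (6 * real P + 4) * ((NN n m (X t) - NN n m (X (t + P))) / c0))"
      by (simp add: mult_left_mono)
    have ge: "0 \<le> NN n m (X t) - NN n m (X (t + P))" using monok by simp
    have eqM: "\<bar>K\<bar> * (real (card E) * (6 * real P + 4) * ((NN n m (X t) - NN n m (X (t + P))) / c0)) =
        (\<bar>K\<bar> * real (card E) * (6 * real P + 4) / c0) * (NN n m (X t) - NN n m (X (t + P)))"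
      using c0 by (simp add: field_simps)
    have "(\<bar>K\<bar> * real (card E) * (6 * real P + 4) / c0) * (NN n m (X t) - NN n m (X (t + P))) \<le>
        (\<bar>K\<bar> * real (card E) * (6 * real P + 4) / c0 + 1) * (NN n m (X t) - NN n m (X (t + P)))"
      using ge by (simp add: distrib_right)
    then show ?thesis using * eqM by linarith
  qed
  define K2 where "K2 = \<bar>K\<bar> * real (card E) * (6 * real P + 4) / c0 + 1"
  have K2: "K2 \<ge> 1" unfolding K2_def using c0 by simp
  define r where "r = 1 - 1 / K2"
  have r: "0 \<le> r" "r < 1" unfolding r_def using K2 by auto
  have stepP: "NN n m (X (t + P)) \<le> r * NN n m (X t)" for t
  proof -
    have "NN n m (X t) \<le> K2 * (NN n m (X t) - NN n m (X (t + P)))" using key unfolding K2_def .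
    then have "NN n m (X t) / K2 \<le> NN n m (X t) - NN n m (X (t + P))" using K2 by (simp add: field_simps)
    then show ?thesis unfolding r_def by (simp add: algebra_simps)
  qed
  have kP: "NN n m (X (k * P)) \<le> r ^ k * NN n m (X 0)" for k
  proof (induction k)
    case (Suc k)
    have "NN n m (X (Suc k * P)) = NN n m (X (k * P + P))" by (simp add: add.commute)
    also have "\<dots> \<le> r * NN n m (X (k * P))" by (rule stepP)
    also have "\<dots> \<le> r * (r ^ k * NN n m (X 0))" using Suc r by (intro mult_left_mono) auto
    finally show ?case by simp
  qed simp
  have bound: "NN n m (X t) \<le> r ^ (t div P) * NN n m (X 0)" for t
  proof -
    have "NN n m (X t) \<le> NN n m (X ((t div P) * P))"
      using monok[of "(t div P) * P" "t mod P"] by (simp add: div_mult_mod_eq)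
    then show ?thesis using kP[of "t div P"] by simp
  qed
  show ?thesis by (rule limit_from_decay[OF NN_nonneg bound r P(1)])
qed

lemma conn_finite: "connected_graph m E \<Longrightarrow> finite E"
  unfolding connected_graph_def
  by (rule finite_subset[of _ "{0..<m} \<times> {0..<m}"]) auto

lemma Q_sum: "set_pmf Q = E \<Longrightarrow> finite E \<Longrightarrow> (\<Sum>e\<in>E. pmf Q e) = 1"
  by (rule sum_pmf_eq_1) auto

lemma exp_step:
  assumes conn: "connected_graph m E" and \<alpha>: "0 < \<alpha>" "\<alpha> < 1" and Q: "set_pmf Q = E"
  shows "\<exists>r. 0 \<le> r \<and> r < 1 \<and> (\<forall>X. sym_avg m X = (\<lambda>a b. 0) \<longrightarrow>
      (\<Sum>e\<in>E. pmf Q e * NN n m (gossip \<alpha> e X)) \<le> r * NN n m X)"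
proof -
  have finE: "finite E" by (rule conn_finite[OF conn])
  have Ene: "E \<noteq> {}" using set_pmf_not_empty[of Q] Q by simp
  define qm where "qm = Min (pmf Q ` E)"
  have qpos: "qm > 0" unfolding qm_def using finE Ene Q by (auto simp: pmf_positive)
  have qle: "qm \<le> pmf Q e" if "e \<in> E" for e unfolding qm_def using finE that by auto
  have qsum: "(\<Sum>e\<in>E. pmf Q e) = 1" by (rule Q_sum[OF Q finE])
  have qm1: "qm \<le> 1"
  proof -
    obtain e where "e \<in> E" using Ene by blast
    then show ?thesis using qle[of e] pmf_le_1[of Q e] by simp
  qed
  define c0 where "c0 = \<alpha> * (1 - \<alpha>)"
  have c0: "c0 > 0" "c0 \<le> 1" using \<alpha> unfolding c0_def by (auto intro: mult_le_one)
  obtain K where K: "\<And>Y. sym_avg m Y = (\<lambda>a b. 0) \<Longrightarrow> NN n m Y \<le> K * DD n m E Y"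
    using poincare[OF conn finE, of n] by blast
  define r where "r = 1 - c0 * qm / (\<bar>K\<bar> + 1)"
  have r: "0 \<le> r" "r < 1"
  proof -
    have "c0 * qm \<le> 1 * 1" using c0 qm1 qpos by (intro mult_mono) auto
    also have "1 * 1 \<le> \<bar>K\<bar> + 1" by simp
    finally show "0 \<le> r" unfolding r_def by simp
    show "r < 1" unfolding r_def using c0 qpos by (simp add: add_pos_nonneg)
  qed
  have "(\<Sum>e\<in>E. pmf Q e * NN n m (gossip \<alpha> e X)) \<le> r * NN n m X" if X: "sym_avg m X = (\<lambda>a b. 0)" for X
  proof -
    have "(\<Sum>e\<in>E. pmf Q e * NN n m (gossip \<alpha> e X)) =
        (\<Sum>e\<in>E. pmf Q e * (NN n m X - c0 * NN n m (dif X (permute_op (sw e) X))))"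
      using NN_gossip edge_Esub[OF conn] unfolding c0_def by (intro sum.cong) auto
    also have "\<dots> = NN n m X - c0 * (\<Sum>e\<in>E. pmf Q e * NN n m (dif X (permute_op (sw e) X)))"
      using qsum by (simp add: algebra_simps sum_subtractf sum_distrib_left flip: sum_distrib_right)
    also have "(\<Sum>e\<in>E. pmf Q e * NN n m (dif X (permute_op (sw e) X))) \<ge> qm * DD n m E X"
      unfolding DD_def sum_distrib_left using qle NN_nonneg by (intro sum_mono mult_right_mono) auto
    then have "NN n m X - c0 * (\<Sum>e\<in>E. pmf Q e * NN n m (dif X (permute_op (sw e) X))) \<le>
        NN n m X - c0 * (qm * DD n m E X)" using c0 by (simp add: mult_left_mono)
    also have "NN n m X \<le> (\<bar>K\<bar> + 1) * DD n m E X"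
    proof -
      have "NN n m X \<le> K * DD n m E X" by (rule K[OF X])
      also have "\<dots> \<le> (\<bar>K\<bar> + 1) * DD n m E X" using DD_nonneg by (intro mult_right_mono) auto
      finally show ?thesis .
    qed
    then have "DD n m E X \<ge> NN n m X / (\<bar>K\<bar> + 1)"
      by (simp add: field_simps add_pos_nonneg)
    then have "c0 * (qm * DD n m E X) \<ge> c0 * (qm * (NN n m X / (\<bar>K\<bar> + 1)))"
      using c0 qpos by (intro mult_left_mono) auto
    then have "NN n m X - c0 * (qm * DD n m E X) \<le> r * NN n m X"
      unfolding r_def by (simp add: algebra_simps)
    finally show ?thesis .
  qed
  then show ?thesis using r by blast
qed

lemma exp_decay:
  assumes conn: "connected_graph m E" and \<alpha>: "0 < \<alpha>" "\<alpha> < 1" and Q: "set_pmf Q = E"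
    and Y: "\<forall>t. Y (Suc t) = (\<lambda>a b. \<Sum>e\<in>E. complex_of_real (pmf Q e) * gossip \<alpha> e (Y t) a b)"
    and sym: "\<forall>t. sym_avg m (Y t) = (\<lambda>a b. 0)"
  shows "(\<lambda>t. NN n m (Y t)) \<longlonglongrightarrow> 0"
proof -
  have finE: "finite E" by (rule conn_finite[OF conn])
  obtain r where r: "0 \<le> r" "r < 1" and rs: "\<And>X. sym_avg m X = (\<lambda>a b. 0) \<Longrightarrow>
      (\<Sum>e\<in>E. pmf Q e * NN n m (gossip \<alpha> e X)) \<le> r * NN n m X"
    using exp_step[OF conn \<alpha> Q, of n] by blast
  have st: "NN n m (Y (Suc t)) \<le> r * NN n m (Y t)" for t
  proof -
    have "NN n m (Y (Suc t)) \<le> (\<Sum>e\<in>E. pmf Q e * NN n m (gossip \<alpha> e (Y t)))"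
      unfolding Y[rule_format] by (rule NN_convex[OF finE]) (auto simp: Q_sum[OF Q finE])
    also have "\<dots> \<le> r * NN n m (Y t)" using rs sym by blast
    finally show ?thesis .
  qed
  have "NN n m (Y t) \<le> r ^ (t div 1) * NN n m (Y 0)" for t
  proof (induction t)
    case (Suc t)
    have "NN n m (Y (Suc t)) \<le> r * NN n m (Y t)" by (rule st)
    also have "\<dots> \<le> r * (r ^ t * NN n m (Y 0))" using Suc r by (intro mult_left_mono) auto
    finally show ?case by simp
  qed simp
  then show ?thesis by (intro limit_from_decay[where P=1, OF NN_nonneg _ r]) auto
qed

lemma density_sa: "density_op n m \<rho> \<Longrightarrow> self_adjoint n m \<rho>"
  unfolding density_op_def by (rule conjunct1)

lemma density_q:
  assumes "density_op n m \<rho>"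
  shows "Im (\<Sum>a\<in>Idx n m. \<Sum>b\<in>Idx n m. cnj (v a) * \<rho> a b * v b) = 0 \<and>
      0 \<le> Re (\<Sum>a\<in>Idx n m. \<Sum>b\<in>Idx n m. cnj (v a) * \<rho> a b * v b)"
proof -
  have "\<forall>v :: idx \<Rightarrow> complex. let q = (\<Sum>a\<in>Idx n m. \<Sum>b\<in>Idx n m. cnj (v a) * \<rho> a b * v b)
        in Im q = 0 \<and> Re q \<ge> 0"
    using assms unfolding density_op_def by (rule conjunct1[OF conjunct2])
  then have "let q = (\<Sum>a\<in>Idx n m. \<Sum>b\<in>Idx n m. cnj (v a) * \<rho> a b * v b)
        in Im q = 0 \<and> Re q \<ge> 0" by (rule spec)
  then show ?thesis unfolding Let_def .
qed

lemma density_tr: "density_op n m \<rho> \<Longrightarrow> op_trace n m \<rho> = 1"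
  unfolding density_op_def by (rule conjunct2[OF conjunct2])

lemma density_intro:
  assumes "self_adjoint n m \<rho>" "op_trace n m \<rho> = 1"
    "\<And>v. Im (\<Sum>a\<in>Idx n m. \<Sum>b\<in>Idx n m. cnj (v a) * \<rho> a b * v b) = 0 \<and>
      0 \<le> Re (\<Sum>a\<in>Idx n m. \<Sum>b\<in>Idx n m. cnj (v a) * \<rho> a b * v b)"
  shows "density_op n m \<rho>"
  unfolding density_op_def Let_def using assms by blast

lemma density_perm:
  assumes d: "density_op n m \<rho>" and p: "\<pi> permutes {0..<m}"
  shows "density_op n m (permute_op \<pi> \<rho>)"
proof -
  have sa: "supported n m \<rho>" "\<And>a b. \<rho> b a = cnj (\<rho> a b)"
    using density_sa[OF d] unfolding self_adjoint_def by blast+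
  have dq: "\<And>v. Im (\<Sum>a\<in>Idx n m. \<Sum>b\<in>Idx n m. cnj (v a) * \<rho> a b * v b) = 0 \<and>
      0 \<le> Re (\<Sum>a\<in>Idx n m. \<Sum>b\<in>Idx n m. cnj (v a) * \<rho> a b * v b)"
    by (rule density_q[OF d])
  have tr: "(\<Sum>a\<in>Idx n m. \<rho> a a) = 1" using density_tr[OF d] unfolding op_trace_def .
  have inv1: "a \<circ> inv \<pi> \<circ> \<pi> = a" for a using permutes_inv_o(2)[OF p] by (simp add: o_assoc[symmetric])
  have notin: "a \<circ> inv \<pi> \<notin> Idx n m" if "a \<notin> Idx n m" for a
  proof
    assume "a \<circ> inv \<pi> \<in> Idx n m"
    from perm_Idx_in'[OF p this] have "a \<in> Idx n m" unfolding inv1 .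
    then show False using that by simp
  qed
  have sup: "supported n m (permute_op \<pi> \<rho>)"
    unfolding supported_def
  proof (intro allI impI)
    fix a b assume "a \<notin> Idx n m \<or> b \<notin> Idx n m"
    then have "a \<circ> inv \<pi> \<notin> Idx n m \<or> b \<circ> inv \<pi> \<notin> Idx n m" using notin by blast
    then show "permute_op \<pi> \<rho> a b = 0" using sa(1) unfolding supported_def permute_op_def by blast
  qed
  have herm: "\<forall>a b. permute_op \<pi> \<rho> b a = cnj (permute_op \<pi> \<rho> a b)"
    unfolding permute_op_def using sa(2) by blast
  have qf: "Im (\<Sum>a\<in>Idx n m. \<Sum>b\<in>Idx n m. cnj (v a) * permute_op \<pi> \<rho> a b * v b) = 0 \<and>
      0 \<le> Re (\<Sum>a\<in>Idx n m. \<Sum>b\<in>Idx n m. cnj (v a) * permute_op \<pi> \<rho> a b * v b)" for v :: "idx \<Rightarrow> complex"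
  proof -
    define w where "w a = v (a \<circ> \<pi>)" for a
    have "(\<Sum>a\<in>Idx n m. \<Sum>b\<in>Idx n m. cnj (v a) * permute_op \<pi> \<rho> a b * v b) =
        (\<Sum>a\<in>Idx n m. \<Sum>b\<in>Idx n m. cnj (w (a \<circ> inv \<pi>)) * \<rho> (a \<circ> inv \<pi>) (b \<circ> inv \<pi>) * w (b \<circ> inv \<pi>))"
      unfolding permute_op_def w_def inv1 ..
    also have "\<dots> = (\<Sum>a\<in>Idx n m. \<Sum>b\<in>Idx n m. cnj (w (a \<circ> inv \<pi>)) * \<rho> (a \<circ> inv \<pi>) b * w b)"
      by (intro sum.cong refl sum_Idx_perm[OF p])
    also have "\<dots> = (\<Sum>a\<in>Idx n m. \<Sum>b\<in>Idx n m. cnj (w a) * \<rho> a b * w b)"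
      by (rule sum_Idx_perm[OF p, where f="\<lambda>a. \<Sum>b\<in>Idx n m. cnj (w a) * \<rho> a b * w b"])
    finally show ?thesis using dq[of w] by simp
  qed
  have "op_trace n m (permute_op \<pi> \<rho>) = 1"
    using tr sum_Idx_perm[OF p, where f="\<lambda>a. \<rho> a a"]
    unfolding op_trace_def permute_op_def by simp
  moreover have "self_adjoint n m (permute_op \<pi> \<rho>)" unfolding self_adjoint_def using sup herm by blast
  ultimately show ?thesis using qf by (intro density_intro) blast+
qed


lemma density_convex:
  fixes c :: "'i \<Rightarrow> real"
  assumes "finite A" "\<And>i. i \<in> A \<Longrightarrow> c i \<ge> 0" "(\<Sum>i\<in>A. c i) = 1"
    and d: "\<And>i. i \<in> A \<Longrightarrow> density_op n m (\<rho> i)"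
  shows "density_op n m (\<lambda>a b. \<Sum>i\<in>A. complex_of_real (c i) * \<rho> i a b)"
proof (rule density_intro)
  have sa1: "\<And>i. i \<in> A \<Longrightarrow> supported n m (\<rho> i)"
    using density_sa[OF d] unfolding self_adjoint_def by blast
  have sa2: "\<And>i a b. i \<in> A \<Longrightarrow> \<rho> i b a = cnj (\<rho> i a b)"
    using density_sa[OF d] unfolding self_adjoint_def by blast
  have sup: "supported n m (\<lambda>a b. \<Sum>i\<in>A. complex_of_real (c i) * \<rho> i a b)"
    unfolding supported_def
  proof (intro allI impI)
    fix a b assume "a \<notin> Idx n m \<or> b \<notin> Idx n m"
    then show "(\<Sum>i\<in>A. complex_of_real (c i) * \<rho> i a b) = 0"
      using sa1 unfolding supported_def by (intro sum.neutral) auto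
  qed
  have herm: "\<forall>a b. (\<Sum>i\<in>A. complex_of_real (c i) * \<rho> i b a) = cnj (\<Sum>i\<in>A. complex_of_real (c i) * \<rho> i a b)"
  proof (intro allI)
    fix a b
    have "complex_of_real (c i) * \<rho> i b a = cnj (complex_of_real (c i) * \<rho> i a b)" if "i \<in> A" for i
      using sa2[OF that, of a b] by simp
    then show "(\<Sum>i\<in>A. complex_of_real (c i) * \<rho> i b a) = cnj (\<Sum>i\<in>A. complex_of_real (c i) * \<rho> i a b)"
      unfolding cnj_sum by (intro sum.cong refl) blast
  qed
  show "self_adjoint n m (\<lambda>a b. \<Sum>i\<in>A. complex_of_real (c i) * \<rho> i a b)"
    unfolding self_adjoint_def using sup herm by blast
next
  fix v :: "idx \<Rightarrow> complex"
  define qi where "qi i = (\<Sum>a\<in>Idx n m. \<Sum>b\<in>Idx n m. cnj (v a) * \<rho> i a b * v b)" for i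
  have qi: "Im (qi i) = 0 \<and> 0 \<le> Re (qi i)" if "i \<in> A" for i
    unfolding qi_def by (rule density_q[OF d[OF that]])
  have "(\<Sum>a\<in>Idx n m. \<Sum>b\<in>Idx n m. cnj (v a) * (\<Sum>i\<in>A. complex_of_real (c i) * \<rho> i a b) * v b)
      = (\<Sum>i\<in>A. complex_of_real (c i) * qi i)"
    unfolding qi_def
    by (simp add: sum_distrib_left sum_distrib_right sum.swap[of _ A] algebra_simps)
  then show "Im (\<Sum>a\<in>Idx n m. \<Sum>b\<in>Idx n m. cnj (v a) * (\<Sum>i\<in>A. complex_of_real (c i) * \<rho> i a b) * v b) = 0 \<and>
      0 \<le> Re (\<Sum>a\<in>Idx n m. \<Sum>b\<in>Idx n m. cnj (v a) * (\<Sum>i\<in>A. complex_of_real (c i) * \<rho> i a b) * v b)"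
    using qi assms(2) by (auto simp: Im_sum Re_sum intro!: sum.neutral sum_nonneg)
next
  have "op_trace n m (\<lambda>a b. \<Sum>i\<in>A. complex_of_real (c i) * \<rho> i a b) =
      (\<Sum>i\<in>A. complex_of_real (c i) * op_trace n m (\<rho> i))"
    unfolding op_trace_def by (simp add: sum_distrib_left sum.swap[of _ A])
  also have "\<dots> = (\<Sum>i\<in>A. complex_of_real (c i))"
    using density_tr[OF d] by simp
  also have "\<dots> = 1" using assms(3) by (metis of_real_1 of_real_sum)
  finally show "op_trace n m (\<lambda>a b. \<Sum>i\<in>A. complex_of_real (c i) * \<rho> i a b) = 1" .
qed

lemma sym_avg_conv: "sym_avg m \<rho> = (\<lambda>a b. \<Sum>\<pi>\<in>Gm m. complex_of_real (1 / real (fact m)) * permute_op \<pi> \<rho> a b)"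
proof (intro ext)
  fix a b
  have "(\<Sum>\<pi>\<in>Gm m. permute_op \<pi> \<rho> a b) / of_nat (fact m) = (\<Sum>\<pi>\<in>Gm m. permute_op \<pi> \<rho> a b / of_nat (fact m))"
    by (rule sum_divide_distrib)
  also have "\<dots> = (\<Sum>\<pi>\<in>Gm m. complex_of_real (1 / real (fact m)) * permute_op \<pi> \<rho> a b)"
    by (intro sum.cong refl) (simp add: of_real_divide)
  finally show "sym_avg m \<rho> a b = (\<Sum>\<pi>\<in>Gm m. complex_of_real (1 / real (fact m)) * permute_op \<pi> \<rho> a b)"
    unfolding sym_avg_alt .
qed

lemma sym_in_SSC:
  assumes "density_op n m \<rho>"
  shows "sym_avg m \<rho> \<in> SSC n m"
proof -
  have "density_op n m (sym_avg m \<rho>)"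
    unfolding sym_avg_conv
    by (rule density_convex) (use assms density_perm card_Gm finite_Gm[unfolded Gm_def] in \<open>auto simp: Gm_def\<close>)
  then show ?thesis unfolding SSC_def using perm_sym_avg by blast
qed

lemma conv_NN:
  assumes "(\<lambda>t. NN n m (dif (\<rho> t) \<sigma>)) \<longlonglongrightarrow> 0"
  shows "converges_to n m \<rho> \<sigma>"
  unfolding converges_to_def hs_NN
  using tendsto_real_sqrt[OF assms] by (simp add: dif_def)

lemma achieves_from_conv:
  assumes "\<And>\<rho>0. density_op n m \<rho>0 \<Longrightarrow> converges_to n m (F \<rho>0) (sym_avg m \<rho>0)"
  shows "achieves_SSC n m F"
  unfolding achieves_SSC_def
proof safe
  fix \<rho>0 assume d: "density_op n m \<rho>0"
  have mem: "sym_avg m \<rho>0 \<in> SSC n m" by (rule sym_in_SSC[OF d])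
  have nn: "\<And>x. 0 \<le> hs_norm n m x" unfolding hs_norm_def by (intro real_sqrt_ge_zero sum_nonneg) auto
  show "(\<lambda>t. INF \<sigma>\<in>SSC n m. hs_norm n m (\<lambda>a b. F \<rho>0 t a b - \<sigma> a b)) \<longlonglongrightarrow> 0"
  proof (rule tendsto_sandwich[OF _ _ tendsto_const])
    show "\<forall>\<^sub>F t in sequentially. 0 \<le> (INF \<sigma>\<in>SSC n m. hs_norm n m (\<lambda>a b. F \<rho>0 t a b - \<sigma> a b))"
    proof (intro always_eventually allI)
      fix t
      show "0 \<le> (INF \<sigma>\<in>SSC n m. hs_norm n m (\<lambda>a b. F \<rho>0 t a b - \<sigma> a b))"
        using mem nn by (intro cINF_greatest) blast+
    qed
    show "\<forall>\<^sub>F t in sequentially. (INF \<sigma>\<in>SSC n m. hs_norm n m (\<lambda>a b. F \<rho>0 t a b - \<sigma> a b))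
        \<le> hs_norm n m (\<lambda>a b. F \<rho>0 t a b - sym_avg m \<rho>0 a b)"
    proof (intro always_eventually allI)
      fix t
      have "bdd_below ((\<lambda>\<sigma>. hs_norm n m (\<lambda>a b. F \<rho>0 t a b - \<sigma> a b)) ` SSC n m)"
        using nn by (intro bdd_belowI2) 
      then show "(INF \<sigma>\<in>SSC n m. hs_norm n m (\<lambda>a b. F \<rho>0 t a b - \<sigma> a b))
        \<le> hs_norm n m (\<lambda>a b. F \<rho>0 t a b - sym_avg m \<rho>0 a b)"
        using mem by (rule cINF_lower)
    qed
    show "(\<lambda>t. hs_norm n m (\<lambda>a b. F \<rho>0 t a b - sym_avg m \<rho>0 a b)) \<longlonglongrightarrow> 0"
      using assms[OF d] unfolding converges_to_def .
  qed
qed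

lemma traj_sym:
  assumes "\<forall>s<t. fst (es s) < m \<and> snd (es s) < m"
  shows "sym_avg m (traj \<alpha> es \<rho>0 t) = sym_avg m \<rho>0"
  using assms by (induction t) (auto simp: sym_avg_gossip)

lemma traj_X:
  assumes "fst (es t) < m" "snd (es t) < m"
  shows "dif (traj \<alpha> es \<rho>0 (Suc t)) (sym_avg m \<rho>0) = gossip \<alpha> (es t) (dif (traj \<alpha> es \<rho>0 t) (sym_avg m \<rho>0))"
  using gossip_dif[of "es t" "sym_avg m \<rho>0" \<alpha> "traj \<alpha> es \<rho>0 t"] perm_sym_avg[OF sw_permutes[OF assms]]
  by simp

lemma dif_sym_zero:
  assumes "sym_avg m Z = sym_avg m \<rho>0"
  shows "sym_avg m (dif Z (sym_avg m \<rho>0)) = (\<lambda>a b. 0)"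
  unfolding sym_avg_dif assms sym_avg_idem by (simp add: dif_def)

lemma exp_traj_sym:
  assumes conn: "connected_graph m E" and Q: "set_pmf Q = E"
  shows "sym_avg m (exp_traj \<alpha> Q E \<rho>0 t) = sym_avg m \<rho>0"
proof (induction t)
  case (Suc t)
  have "sym_avg m (exp_traj \<alpha> Q E \<rho>0 (Suc t)) =
      (\<lambda>a b. \<Sum>e\<in>E. complex_of_real (pmf Q e) * sym_avg m (gossip \<alpha> e (exp_traj \<alpha> Q E \<rho>0 t)) a b)"
    by (simp add: sym_avg_sum)
  also have "\<dots> = (\<lambda>a b. \<Sum>e\<in>E. complex_of_real (pmf Q e) * sym_avg m \<rho>0 a b)"
    using sym_avg_gossip edge_Esub[OF conn] Suc by (intro ext sum.cong) auto
  also have "\<dots> = sym_avg m \<rho>0"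
    using Q_sum[OF Q conn_finite[OF conn]] by (simp add: fun_eq_iff flip: sum_distrib_right of_real_sum)
  finally show ?case .
qed simp

lemma exp_traj_X:
  assumes conn: "connected_graph m E" and Q: "set_pmf Q = E"
  shows "dif (exp_traj \<alpha> Q E \<rho>0 (Suc t)) (sym_avg m \<rho>0) =
     (\<lambda>a b. \<Sum>e\<in>E. complex_of_real (pmf Q e) * gossip \<alpha> e (dif (exp_traj \<alpha> Q E \<rho>0 t) (sym_avg m \<rho>0)) a b)"
proof (rule ext, rule ext)
  fix a b
  have g: "gossip \<alpha> e (dif (exp_traj \<alpha> Q E \<rho>0 t) (sym_avg m \<rho>0)) a b =
      gossip \<alpha> e (exp_traj \<alpha> Q E \<rho>0 t) a b - sym_avg m \<rho>0 a b" if "e \<in> E" for e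
    using gossip_dif[OF perm_sym_avg[OF sw_permutes]] edge_Esub[OF conn that] by (simp add: dif_def)
  have s1: "(\<Sum>e\<in>E. complex_of_real (pmf Q e)) = 1"
    using Q_sum[OF Q conn_finite[OF conn]] by (metis of_real_1 of_real_sum)
  have "(\<Sum>e\<in>E. complex_of_real (pmf Q e) * gossip \<alpha> e (dif (exp_traj \<alpha> Q E \<rho>0 t) (sym_avg m \<rho>0)) a b)
      = (\<Sum>e\<in>E. complex_of_real (pmf Q e) * gossip \<alpha> e (exp_traj \<alpha> Q E \<rho>0 t) a b
           - complex_of_real (pmf Q e) * sym_avg m \<rho>0 a b)"
    using g by (intro sum.cong refl) (simp only: right_diff_distrib)
  also have "\<dots> = (\<Sum>e\<in>E. complex_of_real (pmf Q e) * gossip \<alpha> e (exp_traj \<alpha> Q E \<rho>0 t) a b)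
       - (\<Sum>e\<in>E. complex_of_real (pmf Q e)) * sym_avg m \<rho>0 a b"
    by (simp add: sum_subtractf sum_distrib_right)
  finally show "dif (exp_traj \<alpha> Q E \<rho>0 (Suc t)) (sym_avg m \<rho>0) a b =
     (\<Sum>e\<in>E. complex_of_real (pmf Q e) * gossip \<alpha> e (dif (exp_traj \<alpha> Q E \<rho>0 t) (sym_avg m \<rho>0)) a b)"
    unfolding s1 by (simp add: dif_def)
qed

definition herm :: "op \<Rightarrow> bool" where "herm X \<longleftrightarrow> (\<forall>a b. X b a = cnj (X a b))"

lemma herm_perm: "herm X \<Longrightarrow> herm (permute_op \<pi> X)"
  unfolding herm_def permute_op_def by blast

lemma herm_gossip:
  assumes "herm X" shows "herm (gossip \<alpha> e X)"
proof -
  have h: "herm (permute_op (Transposition.transpose (fst e) (snd e)) X)" by (rule herm_perm[OF assms])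
  show ?thesis unfolding herm_def
  proof (intro allI)
    fix a b
    have "X b a = cnj (X a b)" using assms unfolding herm_def by blast
    moreover have "permute_op (Transposition.transpose (fst e) (snd e)) X b a =
        cnj (permute_op (Transposition.transpose (fst e) (snd e)) X a b)" using h unfolding herm_def by blast
    ultimately show "gossip \<alpha> e X b a = cnj (gossip \<alpha> e X a b)"
      unfolding gossip_def by simp
  qed
qed

lemma herm_traj: "herm \<rho>0 \<Longrightarrow> herm (traj \<alpha> es \<rho>0 t)"
  by (induction t) (auto intro: herm_gossip)

lemma herm_sym: "herm X \<Longrightarrow> herm (sym_avg m X)"
proof -
  assume h: "herm X"
  show ?thesis unfolding herm_def
  proof (intro allI)
    fix a b
    have hp: "\<And>\<pi>. permute_op \<pi> X b a = cnj (permute_op \<pi> X a b)"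
      using herm_perm[OF h] unfolding herm_def by blast
    have "(\<Sum>\<pi>\<in>Gm m. permute_op \<pi> X b a) = cnj (\<Sum>\<pi>\<in>Gm m. permute_op \<pi> X a b)"
      unfolding cnj_sum by (rule sum.cong[OF refl]) (rule hp)
    then show "sym_avg m X b a = cnj (sym_avg m X a b)"
      unfolding sym_avg_alt by simp
  qed
qed

lemma herm_dif: "herm X \<Longrightarrow> herm Y \<Longrightarrow> herm (dif X Y)"
proof -
  assume hx: "herm X" and hy: "herm Y"
  show ?thesis unfolding herm_def
  proof (intro allI)
    fix a b
    have "X b a = cnj (X a b)" "Y b a = cnj (Y a b)" using hx hy unfolding herm_def by blast+
    then show "dif X Y b a = cnj (dif X Y a b)" unfolding dif_def by simp
  qed
qed

lemma density_herm: "density_op n m \<rho> \<Longrightarrow> herm \<rho>"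
  using density_sa unfolding self_adjoint_def herm_def by blast

lemma trace_sq_herm:
  assumes "herm D"
  shows "Re (op_trace n m (op_mult n m D D)) = NN n m D"
proof -
  have "op_trace n m (op_mult n m D D) = (\<Sum>a\<in>Idx n m. \<Sum>c\<in>Idx n m. D a c * D c a)"
    unfolding op_trace_def op_mult_def by simp
  also have "\<dots> = (\<Sum>a\<in>Idx n m. \<Sum>c\<in>Idx n m. complex_of_real ((cmod (D a c))\<^sup>2))"
  proof (intro sum.cong refl)
    fix a c
    have "D c a = cnj (D a c)" using assms unfolding herm_def by blast
    then show "D a c * D c a = complex_of_real ((cmod (D a c))\<^sup>2)"
      by (subst \<open>D c a = cnj (D a c)\<close>) (rule complex_norm_square[symmetric])
  qed
  finally have "op_trace n m (op_mult n m D D) = (\<Sum>a\<in>Idx n m. \<Sum>c\<in>Idx n m. complex_of_real ((cmod (D a c))\<^sup>2))" .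
  then show ?thesis unfolding NN_def by (simp add: Re_sum)
qed

lemma traj_cong: "(\<forall>s<T. es s = es' s) \<Longrightarrow> traj \<alpha> es \<rho>0 T = traj \<alpha> es' \<rho>0 T"
  by (induction T) auto

abbreviation PiQ where "PiQ Q T \<equiv> Pi_pmf {..<T} undefined (\<lambda>_::nat. Q)"

lemma set_PiQ: "es \<in> set_pmf (PiQ Q T) \<Longrightarrow> s < T \<Longrightarrow> es s \<in> set_pmf Q"
  using set_Pi_pmf[of "{..<T}" undefined "\<lambda>_. Q"] unfolding PiE_dflt_def by auto

lemma finite_PiQ: "finite (set_pmf Q) \<Longrightarrow> finite (set_pmf (PiQ Q T))"
  by (subst set_Pi_pmf) auto

lemma expect_decay:
  assumes conn: "connected_graph m E" and \<alpha>: "0 < \<alpha>" "\<alpha> < 1" and Q: "set_pmf Q = E"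
    and r0: "0 \<le> r" and r: "\<And>X. sym_avg m X = (\<lambda>a b. 0) \<Longrightarrow> (\<Sum>e\<in>E. pmf Q e * NN n m (gossip \<alpha> e X)) \<le> r * NN n m X"
  shows "measure_pmf.expectation (PiQ Q T) (\<lambda>es. NN n m (dif (traj \<alpha> es \<rho>0 T) (sym_avg m \<rho>0)))
     \<le> r ^ T * NN n m (dif \<rho>0 (sym_avg m \<rho>0))"
proof (induction T)
  case 0
  then show ?case by simp
next
  case (Suc T)
  have finE: "finite E" by (rule conn_finite[OF conn])
  define S where "S = set_pmf (PiQ Q T)"
  have finS: "finite S" unfolding S_def using finite_PiQ[of Q T] finE Q by simp
  define X where "X f = dif (traj \<alpha> f \<rho>0 T) (sym_avg m \<rho>0)" for f
  have symX: "sym_avg m (X f) = (\<lambda>a b. 0)" if "f \<in> S" for f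
  proof -
    have "\<forall>s<T. fst (f s) < m \<and> snd (f s) < m"
      using set_PiQ[OF that[unfolded S_def]] Q edge_Esub[OF conn] by auto
    then have "sym_avg m (traj \<alpha> f \<rho>0 T) = sym_avg m \<rho>0" by (rule traj_sym)
    then show ?thesis unfolding X_def by (rule dif_sym_zero)
  qed
  have upd: "NN n m (dif (traj \<alpha> (f(T := y)) \<rho>0 (Suc T)) (sym_avg m \<rho>0)) = NN n m (gossip \<alpha> y (X f))"
    if "y \<in> E" for f y
  proof -
    have tc: "traj \<alpha> (f(T := y)) \<rho>0 T = traj \<alpha> f \<rho>0 T" by (rule traj_cong) auto
    have "fst ((f(T := y)) T) < m" "snd ((f(T := y)) T) < m" using edge_Esub[OF conn that] by auto
    from traj_X[where es="f(T := y)" and t=T, OF this]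
    have "dif (traj \<alpha> (f(T := y)) \<rho>0 (Suc T)) (sym_avg m \<rho>0) =
        gossip \<alpha> y (dif (traj \<alpha> (f(T := y)) \<rho>0 T) (sym_avg m \<rho>0))" by simp
    then show ?thesis unfolding X_def tc by simp
  qed
  have "PiQ Q (Suc T) = map_pmf (\<lambda>(y,f). f(T:=y)) (pair_pmf Q (PiQ Q T))"
    unfolding lessThan_Suc by (rule Pi_pmf_insert) auto
  then have "measure_pmf.expectation (PiQ Q (Suc T)) (\<lambda>es. NN n m (dif (traj \<alpha> es \<rho>0 (Suc T)) (sym_avg m \<rho>0)))
      = measure_pmf.expectation (pair_pmf Q (PiQ Q T))
          (\<lambda>x. NN n m (dif (traj \<alpha> ((snd x)(T := fst x)) \<rho>0 (Suc T)) (sym_avg m \<rho>0)))"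
    by (simp add: case_prod_beta)
  also have "\<dots> = (\<Sum>x\<in>E \<times> S. NN n m (dif (traj \<alpha> ((snd x)(T := fst x)) \<rho>0 (Suc T)) (sym_avg m \<rho>0)) *
        pmf (pair_pmf Q (PiQ Q T)) x)"
    by (rule integral_measure_pmf_real) (use finE finS Q in \<open>auto simp: S_def\<close>)
  also have "\<dots> = (\<Sum>y\<in>E. \<Sum>f\<in>S. NN n m (dif (traj \<alpha> (f(T := y)) \<rho>0 (Suc T)) (sym_avg m \<rho>0)) *
        pmf (pair_pmf Q (PiQ Q T)) (y, f))"
    unfolding sum.cartesian_product by (simp add: case_prod_beta del: traj.simps)
  also have "\<dots> = (\<Sum>y\<in>E. \<Sum>f\<in>S. pmf (PiQ Q T) f * (pmf Q y * NN n m (gossip \<alpha> y (X f))))"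
    by (intro sum.cong refl) (simp add: upd pmf_pair del: traj.simps)
  also have "\<dots> = (\<Sum>f\<in>S. \<Sum>y\<in>E. pmf (PiQ Q T) f * (pmf Q y * NN n m (gossip \<alpha> y (X f))))"
    by (rule sum.swap)
  also have "\<dots> = (\<Sum>f\<in>S. pmf (PiQ Q T) f * (\<Sum>y\<in>E. pmf Q y * NN n m (gossip \<alpha> y (X f))))"
    by (simp add: sum_distrib_left)
  also have "\<dots> \<le> (\<Sum>f\<in>S. pmf (PiQ Q T) f * (r * NN n m (X f)))"
    by (intro sum_mono mult_left_mono r symX) auto
  also have "\<dots> = r * (\<Sum>f\<in>S. NN n m (X f) * pmf (PiQ Q T) f)"
    by (simp add: sum_distrib_left algebra_simps)
  also have "(\<Sum>f\<in>S. NN n m (X f) * pmf (PiQ Q T) f) =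
      measure_pmf.expectation (PiQ Q T) (\<lambda>es. NN n m (dif (traj \<alpha> es \<rho>0 T) (sym_avg m \<rho>0)))"
    unfolding X_def by (rule integral_measure_pmf_real[symmetric]) (use finS in \<open>auto simp: S_def\<close>)
  finally have *: "measure_pmf.expectation (PiQ Q (Suc T)) (\<lambda>es. NN n m (dif (traj \<alpha> es \<rho>0 (Suc T)) (sym_avg m \<rho>0)))
      \<le> r * measure_pmf.expectation (PiQ Q T) (\<lambda>es. NN n m (dif (traj \<alpha> es \<rho>0 T) (sym_avg m \<rho>0)))" .
  also have "r * measure_pmf.expectation (PiQ Q T) (\<lambda>es. NN n m (dif (traj \<alpha> es \<rho>0 T) (sym_avg m \<rho>0)))
      \<le> r * (r ^ T * NN n m (dif \<rho>0 (sym_avg m \<rho>0)))"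
    by (rule mult_left_mono[OF Suc r0])
  finally show ?case by simp
qed

lemma part3:
  assumes conn: "connected_graph m E" and \<alpha>: "0 < \<alpha>" "\<alpha> < 1" and Q: "set_pmf Q = E"
    and d: "density_op n m \<rho>0" and \<delta>: "\<delta> > 0" and \<epsilon>: "\<epsilon> > 0"
  shows "\<exists>T>0. measure_pmf.prob (PiQ Q T)
             {es. Re (op_trace n m (op_mult n m (\<lambda>a b. traj \<alpha> es \<rho>0 T a b - sym_avg m \<rho>0 a b)
                                              (\<lambda>a b. traj \<alpha> es \<rho>0 T a b - sym_avg m \<rho>0 a b))) > \<epsilon>}
           < \<delta>"
proof -
  obtain r where r: "0 \<le> r" "r < 1" and rs: "\<And>X. sym_avg m X = (\<lambda>a b. 0) \<Longrightarrow>
      (\<Sum>e\<in>E. pmf Q e * NN n m (gossip \<alpha> e X)) \<le> r * NN n m X"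
    using exp_step[OF conn \<alpha> Q, of n] by blast
  define N0 where "N0 = NN n m (dif \<rho>0 (sym_avg m \<rho>0))"
  define F where "F T es = NN n m (dif (traj \<alpha> es \<rho>0 T) (sym_avg m \<rho>0))" for T es
  have EV: "measure_pmf.expectation (PiQ Q T) (F T) \<le> r ^ T * N0" for T
    unfolding F_def N0_def by (rule expect_decay[OF conn \<alpha> Q r(1) rs])
  have hr: "herm \<rho>0" by (rule density_herm[OF d])
  have setEq: "{es. Re (op_trace n m (op_mult n m (\<lambda>a b. traj \<alpha> es \<rho>0 T a b - sym_avg m \<rho>0 a b)
                                              (\<lambda>a b. traj \<alpha> es \<rho>0 T a b - sym_avg m \<rho>0 a b))) > \<epsilon>}
      = {es. F T es > \<epsilon>}" for T
  proof -
    have "Re (op_trace n m (op_mult n m (\<lambda>a b. traj \<alpha> es \<rho>0 T a b - sym_avg m \<rho>0 a b)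
                                     (\<lambda>a b. traj \<alpha> es \<rho>0 T a b - sym_avg m \<rho>0 a b))) = F T es" for es
      using trace_sq_herm[OF herm_dif[OF herm_traj[OF hr] herm_sym[OF hr]], of n m]
      unfolding F_def dif_def by simp
    then show ?thesis by simp
  qed
  have fin: "finite (set_pmf (PiQ Q T))" for T
    using finite_PiQ[of Q T] conn_finite[OF conn] Q by simp
  have prob: "measure_pmf.prob (PiQ Q T) {es. F T es > \<epsilon>} \<le> r ^ T * N0 / \<epsilon>" for T
  proof -
    have "measure_pmf.prob (PiQ Q T) {es. F T es > \<epsilon>} \<le> measure_pmf.prob (PiQ Q T) {x \<in> space (PiQ Q T). \<epsilon> \<le> F T x}"
      by (intro measure_pmf.finite_measure_mono) auto
    also have "\<dots> \<le> measure_pmf.expectation (PiQ Q T) (F T) / \<epsilon>"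
      by (rule integral_Markov_inequality_measure[where A=UNIV])
         (use \<epsilon> fin in \<open>auto simp: F_def NN_nonneg integrable_measure_pmf_finite\<close>)
    also have "\<dots> \<le> r ^ T * N0 / \<epsilon>" using EV[of T] \<epsilon> by (simp add: divide_right_mono)
    finally show ?thesis .
  qed
  have "(\<lambda>T. r ^ T * N0 / \<epsilon>) \<longlonglongrightarrow> 0 * N0 / \<epsilon>"
    by (intro tendsto_intros LIMSEQ_power_zero) (use r \<epsilon> in auto)
  then have "\<forall>\<^sub>F T in sequentially. r ^ T * N0 / \<epsilon> < \<delta>"
    using \<delta> by (intro order_tendstoD(2)) auto
  then obtain T0 where T0: "\<And>T. T \<ge> T0 \<Longrightarrow> r ^ T * N0 / \<epsilon> < \<delta>"
    unfolding eventually_sequentially by blast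
  define T where "T = Suc T0"
  have "measure_pmf.prob (PiQ Q T) {es. F T es > \<epsilon>} < \<delta>"
    using prob[of T] T0[of T] unfolding T_def by simp
  then show ?thesis unfolding setEq by (intro exI[of _ T]) (simp add: T_def)
qed

abbreviation tr :: "nat \<Rightarrow> nat \<Rightarrow> op \<Rightarrow> op \<Rightarrow> complex" where
  "tr n m A B \<equiv> op_trace n m (op_mult n m A B)"

lemma tr_eq: "tr n m A B = (\<Sum>a\<in>Idx n m. \<Sum>c\<in>Idx n m. A a c * B c a)"
  unfolding op_trace_def op_mult_def by simp

lemma tr_perm:
  assumes p: "\<pi> permutes {0..<m}"
  shows "tr n m A (permute_op \<pi> B) = tr n m (permute_op (inv \<pi>) A) B"
proof -
  have inv1: "x \<circ> inv \<pi> \<circ> \<pi> = x" for x :: idx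
    using permutes_inv_o(2)[OF p] by (simp add: o_assoc[symmetric])
  define g where "g x y = A (x \<circ> \<pi>) (y \<circ> \<pi>) * B y x" for x y
  have "tr n m A (permute_op \<pi> B) = (\<Sum>a\<in>Idx n m. \<Sum>c\<in>Idx n m. g (a \<circ> inv \<pi>) (c \<circ> inv \<pi>))"
    unfolding tr_eq g_def permute_op_def inv1 ..
  also have "\<dots> = (\<Sum>a\<in>Idx n m. \<Sum>c\<in>Idx n m. g (a \<circ> inv \<pi>) c)"
    by (intro sum.cong refl sum_Idx_perm[OF p])
  also have "\<dots> = (\<Sum>a\<in>Idx n m. \<Sum>c\<in>Idx n m. g a c)"
    by (rule sum_Idx_perm[OF p, where f="\<lambda>a. \<Sum>c\<in>Idx n m. g a c"])
  also have "\<dots> = tr n m (permute_op (inv \<pi>) A) B"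
    unfolding tr_eq g_def permute_op_def permutes_inv_inv[OF p] ..
  finally show ?thesis .
qed

lemma tr_lin: "tr n m A (\<lambda>a b. \<Sum>i\<in>I. c i * B i a b) = (\<Sum>i\<in>I. c i * tr n m A (B i))"
  unfolding tr_eq by (simp add: sum_distrib_left sum.swap[of _ I] algebra_simps)

definition invariant :: "nat \<Rightarrow> op \<Rightarrow> bool" where
  "invariant m A \<longleftrightarrow> (\<forall>\<pi>. \<pi> permutes {0..<m} \<longrightarrow> permute_op \<pi> A = A)"

lemma tr_perm_inv:
  assumes "invariant m A" "\<pi> permutes {0..<m}"
  shows "tr n m A (permute_op \<pi> B) = tr n m A B"
  using tr_perm[OF assms(2)] assms(1) permutes_inv[OF assms(2)] unfolding invariant_def by metis

lemma tr_gossip: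
  assumes "invariant m A" "fst e < m" "snd e < m"
  shows "tr n m A (gossip \<alpha> e B) = tr n m A B"
proof -
  have "tr n m A (gossip \<alpha> e B) = complex_of_real (1 - \<alpha>) * tr n m A B + complex_of_real \<alpha> * tr n m A (permute_op (sw e) B)"
  proof -
    have "tr n m A (gossip \<alpha> e B) = (\<Sum>a\<in>Idx n m. \<Sum>c\<in>Idx n m. complex_of_real (1 - \<alpha>) * (A a c * B c a)
        + complex_of_real \<alpha> * (A a c * permute_op (sw e) B c a))"
      unfolding tr_eq gossip_def sw_def by (intro sum.cong refl) (simp only: ring_distribs mult.left_commute)
    also have "\<dots> = (\<Sum>a\<in>Idx n m. \<Sum>c\<in>Idx n m. complex_of_real (1 - \<alpha>) * (A a c * B c a))
        + (\<Sum>a\<in>Idx n m. \<Sum>c\<in>Idx n m. complex_of_real \<alpha> * (A a c * permute_op (sw e) B c a))"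
      by (simp only: sum.distrib)
    also have "\<dots> = complex_of_real (1 - \<alpha>) * tr n m A B + complex_of_real \<alpha> * tr n m A (permute_op (sw e) B)"
      unfolding tr_eq by (simp only: sum_distrib_left)
    finally show ?thesis .
  qed
  also have "tr n m A (permute_op (sw e) B) = tr n m A B"
    by (rule tr_perm_inv[OF assms(1) sw_permutes[OF assms(2,3)]])
  finally show ?thesis by (simp add: algebra_simps flip: distrib_right of_real_add)
qed

lemma tr_traj:
  assumes "invariant m A" "\<forall>t. fst (es t) < m \<and> snd (es t) < m"
  shows "tr n m A (traj \<alpha> es \<rho>0 t) = tr n m A \<rho>0"
  by (induction t) (use assms tr_gossip in auto)

lemma tr_exp:
  assumes "invariant m A" and conn: "connected_graph m E" and Q: "set_pmf Q = E"
  shows "tr n m A (exp_traj \<alpha> Q E \<rho>0 t) = tr n m A \<rho>0"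
proof (induction t)
  case (Suc t)
  have "tr n m A (exp_traj \<alpha> Q E \<rho>0 (Suc t)) = (\<Sum>e\<in>E. complex_of_real (pmf Q e) * tr n m A (gossip \<alpha> e (exp_traj \<alpha> Q E \<rho>0 t)))"
    by (simp add: tr_lin)
  also have "\<dots> = (\<Sum>e\<in>E. complex_of_real (pmf Q e) * tr n m A \<rho>0)"
    using tr_gossip[OF assms(1)] edge_Esub[OF conn] Suc by (intro sum.cong) auto
  also have "\<dots> = tr n m A \<rho>0"
    using Q_sum[OF Q conn_finite[OF conn]] by (simp flip: sum_distrib_right of_real_sum)
  finally show ?case .
qed simp

lemma tr_sym:
  assumes "invariant m A"
  shows "tr n m A (sym_avg m \<rho>) = tr n m A \<rho>"
proof -
  have "tr n m A (sym_avg m \<rho>) = (\<Sum>\<pi>\<in>Gm m. complex_of_real (1 / real (fact m)) * tr n m A (permute_op \<pi> \<rho>))"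
    unfolding sym_avg_conv tr_lin ..
  also have "\<dots> = (\<Sum>\<pi>\<in>Gm m. complex_of_real (1 / real (fact m)) * tr n m A \<rho>)"
    using tr_perm_inv[OF assms] by (intro sum.cong) (auto simp: Gm_def)
  also have "\<dots> = tr n m A \<rho>" by (simp add: card_Gm)
  finally show ?thesis .
qed

lemma entry_conv:
  assumes "converges_to n m F \<sigma>" "c \<in> Idx n m" "a \<in> Idx n m"
  shows "(\<lambda>t. F t c a) \<longlonglongrightarrow> \<sigma> c a"
proof -
  have le: "cmod (F t c a - \<sigma> c a) \<le> hs_norm n m (\<lambda>a b. F t a b - \<sigma> a b)" for t
  proof -
    have "(cmod (F t c a - \<sigma> c a))\<^sup>2 \<le> (\<Sum>b\<in>Idx n m. (cmod (F t c b - \<sigma> c b))\<^sup>2)"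
      using assms(3) by (intro member_le_sum) auto
    also have "\<dots> \<le> (\<Sum>x\<in>Idx n m. \<Sum>b\<in>Idx n m. (cmod (F t x b - \<sigma> x b))\<^sup>2)"
      using assms(2) by (intro member_le_sum[of c "Idx n m" "\<lambda>x. \<Sum>b\<in>Idx n m. (cmod (F t x b - \<sigma> x b))\<^sup>2"] sum_nonneg) auto
    finally show ?thesis unfolding hs_norm_def by (simp add: real_le_rsqrt)
  qed
  have "(\<lambda>t. F t c a - \<sigma> c a) \<longlonglongrightarrow> 0"
    by (rule Lim_null_comparison[OF always_eventually[OF allI[OF le]]])
       (use assms(1) in \<open>simp add: converges_to_def\<close>)
  from tendsto_add[OF this tendsto_const[of "\<sigma> c a"]] show ?thesis by simp
qed

lemma tr_conv:
  assumes "converges_to n m F \<sigma>"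
  shows "(\<lambda>t. tr n m A (F t)) \<longlonglongrightarrow> tr n m A \<sigma>"
  unfolding tr_eq by (intro tendsto_sum tendsto_mult_left entry_conv[OF assms])

lemma Idx_perm_iff:
  assumes p: "\<pi> permutes {0..<m}"
  shows "a \<circ> inv \<pi> \<in> Idx n m \<longleftrightarrow> a \<in> Idx n m"
proof
  assume "a \<circ> inv \<pi> \<in> Idx n m"
  from perm_Idx_in'[OF p this] show "a \<in> Idx n m"
    using permutes_inv_o(2)[OF p] by (simp add: o_assoc[symmetric])
qed (rule perm_Idx_in[OF p])

lemma perm_local:
  assumes p: "\<pi> permutes {0..<m}" and i: "i < m"
  shows "permute_op \<pi> (local_op n m i \<sigma>) = local_op n m (inv \<pi> i) \<sigma>"
proof (intro ext)
  fix a b :: idx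
  have ip: "inv \<pi> permutes {0..<m}" by (rule permutes_inv[OF p])
  have bij: "bij_betw (inv \<pi>) ({0..<m} - {i}) ({0..<m} - {inv \<pi> i})"
  proof (rule bij_betw_byWitness[where f'=\<pi>])
    show "\<forall>x\<in>{0..<m} - {i}. \<pi> (inv \<pi> x) = x" using permutes_inverses(1)[OF p] by simp
    show "\<forall>x\<in>{0..<m} - {inv \<pi> i}. inv \<pi> (\<pi> x) = x" using permutes_inverses(2)[OF p] by simp
    show "inv \<pi> ` ({0..<m} - {i}) \<subseteq> {0..<m} - {inv \<pi> i}"
      using permutes_in_image[OF ip] permutes_inverses(1)[OF p] by (auto) (metis)
    show "\<pi> ` ({0..<m} - {inv \<pi> i}) \<subseteq> {0..<m} - {i}"
      using permutes_in_image[OF p] permutes_inverses[OF p] by auto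
  qed
  have prod: "(\<Prod>l\<in>{0..<m} - {i}. if a (inv \<pi> l) = b (inv \<pi> l) then 1 else 0) =
      (\<Prod>l\<in>{0..<m} - {inv \<pi> i}. if a l = b l then (1::complex) else 0)"
    using prod.reindex_bij_betw[OF bij, of "\<lambda>l. if a l = b l then (1::complex) else 0"] by simp
  show "permute_op \<pi> (local_op n m i \<sigma>) a b = local_op n m (inv \<pi> i) \<sigma> a b"
    unfolding permute_op_def local_op_def Idx_perm_iff[OF p] using prod by simp
qed

definition Savg :: "nat \<Rightarrow> nat \<Rightarrow> (nat \<Rightarrow> nat \<Rightarrow> complex) \<Rightarrow> op" where
  "Savg n m \<sigma> = (\<lambda>a b. (\<Sum>i<m. local_op n m i \<sigma> a b) / of_nat m)"

lemma Savg_invariant: "invariant m (Savg n m \<sigma>)"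
  unfolding invariant_def
proof (intro allI impI ext)
  fix \<pi> a b assume p: "\<pi> permutes {0..<m}"
  have bij: "bij_betw (inv \<pi>) {..<m} {..<m}"
    using permutes_imp_bij[OF permutes_inv[OF p]] by (simp add: atLeast0LessThan)
  have "(\<Sum>i<m. permute_op \<pi> (local_op n m i \<sigma>) a b) = (\<Sum>i<m. local_op n m (inv \<pi> i) \<sigma> a b)"
    using perm_local[OF p] by (intro sum.cong) auto
  also have "\<dots> = (\<Sum>i<m. local_op n m i \<sigma> a b)"
    using sum.reindex_bij_betw[OF bij, of "\<lambda>i. local_op n m i \<sigma> a b"] by simp
  finally show "permute_op \<pi> (Savg n m \<sigma>) a b = Savg n m \<sigma> a b"
    unfolding Savg_def by (simp add: permute_op_def)
qed

lemma tr_local_eq: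
  assumes inv: "invariant m R" and l: "l < m" "l' < m"
  shows "tr n m (local_op n m l \<sigma>) R = tr n m (local_op n m l' \<sigma>) R"
proof -
  define \<tau> where "\<tau> = Transposition.transpose l l'"
  have tp: "\<tau> permutes {0..<m}" unfolding \<tau>_def using l by (intro permutes_swap_id) auto
  have "tr n m (local_op n m l \<sigma>) R = tr n m (local_op n m l \<sigma>) (permute_op \<tau> R)"
    using inv tp unfolding invariant_def by simp
  also have "\<dots> = tr n m (permute_op (inv \<tau>) (local_op n m l \<sigma>)) R"
    by (rule tr_perm[OF tp])
  also have "permute_op (inv \<tau>) (local_op n m l \<sigma>) = local_op n m (inv (inv \<tau>) l) \<sigma>"
    by (rule perm_local[OF permutes_inv[OF tp] l(1)])
  also have "inv (inv \<tau>) l = l'" unfolding permutes_inv_inv[OF tp] \<tau>_def by simp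
  finally show ?thesis .
qed

lemma tr_Savg:
  assumes inv: "invariant m R" and l: "l < m"
  shows "tr n m (Savg n m \<sigma>) R = tr n m (local_op n m l \<sigma>) R"
proof -
  have "tr n m (Savg n m \<sigma>) R = (\<Sum>i<m. tr n m (local_op n m i \<sigma>) R) / of_nat m"
    unfolding tr_eq Savg_def
    by (simp add: sum_divide_distrib sum_distrib_right sum.swap[of _ "{..<m}"])
  also have "\<dots> = (\<Sum>i<m. tr n m (local_op n m l \<sigma>) R) / of_nat m"
    using tr_local_eq[OF inv _ l] by (intro arg_cong2[where f="(/)"] sum.cong) auto
  also have "\<dots> = tr n m (local_op n m l \<sigma>) R" using l by simp
  finally show ?thesis .
qed

lemma Savg_supported: "supported n m (Savg n m \<sigma>)"
  unfolding supported_def Savg_def local_op_def by auto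

definition psi :: "complex \<Rightarrow> complex \<Rightarrow> idx \<Rightarrow> idx \<Rightarrow> idx \<Rightarrow> complex" where
  "psi u w a b = (\<lambda>c. (if c = a then u else 0) + (if c = b then w else 0))"

definition R1 :: "nat \<Rightarrow> nat \<Rightarrow> complex \<Rightarrow> complex \<Rightarrow> idx \<Rightarrow> idx \<Rightarrow> op" where
  "R1 n m u w a b = (\<lambda>x y. if x \<in> Idx n m \<and> y \<in> Idx n m then psi u w a b x * cnj (psi u w a b y) else 0)"

lemma psi_sum:
  assumes "a \<in> Idx n m" "b \<in> Idx n m" "a \<noteq> b"
  shows "(\<Sum>c\<in>Idx n m. f c * psi u w a b c) = f a * u + f b * w"
proof -
  have "(\<Sum>c\<in>Idx n m. f c * psi u w a b c) =
      (\<Sum>c\<in>Idx n m. (if c = a then f c * u else 0) + (if c = b then f c * w else 0))"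
    unfolding psi_def by (intro sum.cong refl) (auto simp: distrib_left)
  also have "\<dots> = (\<Sum>c\<in>Idx n m. if c = a then f c * u else 0) + (\<Sum>c\<in>Idx n m. if c = b then f c * w else 0)"
    by (rule sum.distrib)
  also have "\<dots> = f a * u + f b * w" using assms by (simp add: sum.delta)
  finally show ?thesis .
qed

lemma cnj_psi: "cnj (psi u w a b c) = psi (cnj u) (cnj w) a b c"
  unfolding psi_def by simp

lemma psi_a: "a \<noteq> b \<Longrightarrow> psi u w a b a = u" unfolding psi_def by simp
lemma psi_b: "a \<noteq> b \<Longrightarrow> psi u w a b b = w" unfolding psi_def by simp

lemma density_R1:
  assumes ab: "a \<in> Idx n m" "b \<in> Idx n m" "a \<noteq> b" and uw: "(cmod u)\<^sup>2 + (cmod w)\<^sup>2 = 1"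
  shows "density_op n m (R1 n m u w a b)"
proof (rule density_intro)
  show "self_adjoint n m (R1 n m u w a b)"
    unfolding self_adjoint_def supported_def R1_def by (auto simp: mult.commute)
next
  fix v :: "idx \<Rightarrow> complex"
  define z where "z = (\<Sum>x\<in>Idx n m. cnj (v x) * psi u w a b x)"
  have "(\<Sum>x\<in>Idx n m. \<Sum>y\<in>Idx n m. cnj (v x) * R1 n m u w a b x y * v y) =
      (\<Sum>x\<in>Idx n m. \<Sum>y\<in>Idx n m. (cnj (v x) * psi u w a b x) * cnj (cnj (v y) * psi u w a b y))"
    unfolding R1_def by (intro sum.cong refl) (simp add: algebra_simps)
  also have "\<dots> = z * cnj z"
    unfolding z_def cnj_sum sum_product ..
  also have "\<dots> = complex_of_real ((cmod z)\<^sup>2)" by (rule complex_norm_square[symmetric])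
  finally show "Im (\<Sum>x\<in>Idx n m. \<Sum>y\<in>Idx n m. cnj (v x) * R1 n m u w a b x y * v y) = 0 \<and>
      0 \<le> Re (\<Sum>x\<in>Idx n m. \<Sum>y\<in>Idx n m. cnj (v x) * R1 n m u w a b x y * v y)" by simp
next
  have "op_trace n m (R1 n m u w a b) = (\<Sum>c\<in>Idx n m. cnj (psi u w a b c) * psi u w a b c)"
    unfolding op_trace_def R1_def by (simp add: mult.commute)
  also have "\<dots> = cnj u * u + cnj w * w"
    using psi_sum[OF ab, of "\<lambda>c. cnj (psi u w a b c)" u w] psi_a[OF ab(3)] psi_b[OF ab(3)] by simp
  also have "\<dots> = complex_of_real ((cmod u)\<^sup>2 + (cmod w)\<^sup>2)"
    unfolding of_real_add complex_norm_square by (simp add: mult.commute)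
  finally show "op_trace n m (R1 n m u w a b) = 1" using uw by simp
qed

lemma tr_R1:
  assumes ab: "a \<in> Idx n m" "b \<in> Idx n m" "a \<noteq> b"
  shows "tr n m A (R1 n m u w a b) = cnj u * (A a a * u + A a b * w) + cnj w * (A b a * u + A b b * w)"
proof -
  have "tr n m A (R1 n m u w a b) = (\<Sum>x\<in>Idx n m. \<Sum>c\<in>Idx n m. A x c * psi u w a b c * psi (cnj u) (cnj w) a b x)"
    unfolding tr_eq R1_def cnj_psi by (intro sum.cong refl) simp
  also have "\<dots> = (\<Sum>x\<in>Idx n m. (\<Sum>c\<in>Idx n m. A x c * psi u w a b c) * psi (cnj u) (cnj w) a b x)"
    by (simp add: sum_distrib_right)
  also have "\<dots> = (\<Sum>x\<in>Idx n m. (A x a * u + A x b * w) * psi (cnj u) (cnj w) a b x)"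
    using psi_sum[OF ab] by simp
  also have "\<dots> = (A a a * u + A a b * w) * cnj u + (A b a * u + A b b * w) * cnj w"
    by (rule psi_sum[OF ab])
  finally show ?thesis by (simp add: mult.commute)
qed

lemma other_idx:
  assumes "a \<in> Idx n m" "n \<ge> 2" "m \<ge> 1"
  shows "\<exists>b\<in>Idx n m. b \<noteq> a"
proof -
  define b where "b = a(0 := (if a 0 = 0 then 1 else 0))"
  have "b \<in> Idx n m" using assms unfolding b_def Idx_def by (auto simp: PiE_iff extensional_def)
  moreover have "b \<noteq> a" unfolding b_def by (metis fun_upd_same zero_neq_one)
  ultimately show ?thesis by blast
qed

lemma alg1:
  fixes P Q X Y X' Y' :: complex
  assumes "cnj (3/5) * (P * (3/5) + X * (4/5)) + cnj (4/5) * (Y * (3/5) + Q * (4/5)) =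
           cnj (3/5) * (P * (3/5) + X' * (4/5)) + cnj (4/5) * (Y' * (3/5) + Q * (4/5))"
  shows "X + Y = X' + Y'"
proof -
  have "cnj (3/5::complex) = 3/5" "cnj (4/5::complex) = 4/5" by (simp_all add: complex_eq_iff)
  with assms have h: "(12/25) * (X + Y) = (12/25) * (X' + Y')"
    by (simp only: ring_distribs mult.assoc mult.commute mult.left_commute) (simp add: algebra_simps)
  show ?thesis using h mult_cancel_left[of "12/25::complex" "X+Y" "X'+Y'"] by simp
qed
lemma alg2:
  fixes P Q X Y X' Y' :: complex
  assumes "cnj (3/5) * (P * (3/5) + X * (4/5 * \<i>)) + cnj (4/5 * \<i>) * (Y * (3/5) + Q * (4/5 * \<i>)) =
           cnj (3/5) * (P * (3/5) + X' * (4/5 * \<i>)) + cnj (4/5 * \<i>) * (Y' * (3/5) + Q * (4/5 * \<i>))"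
  shows "X - Y = X' - Y'"
proof -
  have c: "cnj (3/5::complex) = 3/5" "cnj (4/5 * \<i>) = - (4/5) * \<i>" by (simp_all add: complex_eq_iff)
  have "(X - Y) - (X' - Y') = (25 / (12 * \<i>)) * ((cnj (3/5) * (P * (3/5) + X * (4/5 * \<i>)) + cnj (4/5 * \<i>) * (Y * (3/5) + Q * (4/5 * \<i>))) -
           (cnj (3/5) * (P * (3/5) + X' * (4/5 * \<i>)) + cnj (4/5 * \<i>) * (Y' * (3/5) + Q * (4/5 * \<i>))))"
    unfolding c by (simp add: field_simps)
  then show ?thesis using assms by simp
qed

lemma determ:
  assumes sA: "supported n m A" and sB: "supported n m B" and n: "n \<ge> 2" and m: "m \<ge> 1"
    and eq: "\<And>\<rho>. density_op n m \<rho> \<Longrightarrow> tr n m A \<rho> = tr n m B \<rho>"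
  shows "A = B"
proof (intro ext)
  fix a b
  have diag: "A x x = B x x" if x: "x \<in> Idx n m" for x
  proof -
    obtain y where y: "y \<in> Idx n m" "y \<noteq> x" using other_idx[OF x n m] by blast
    have "(cmod (1::complex))\<^sup>2 + (cmod (0::complex))\<^sup>2 = 1" by simp
    from eq[OF density_R1[OF x y(1) y(2)[symmetric] this]] show ?thesis
      unfolding tr_R1[OF x y(1) y(2)[symmetric]] by simp
  qed
  show "A a b = B a b"
  proof (cases "a \<in> Idx n m \<and> b \<in> Idx n m")
    case False
    then show ?thesis using sA sB unfolding supported_def by auto
  next
    case True
    then have ab: "a \<in> Idx n m" "b \<in> Idx n m" by auto
    show ?thesis
    proof (cases "a = b")
      case True then show ?thesis using diag ab by simp
    next
      case False
      have c1: "(cmod (3/5::complex))\<^sup>2 + (cmod (4/5::complex))\<^sup>2 = 1"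
        by (simp add: norm_divide power2_eq_square)
      have c2: "(cmod (3/5::complex))\<^sup>2 + (cmod (4/5 * \<i>::complex))\<^sup>2 = 1"
        by (simp add: norm_divide norm_mult power2_eq_square)
      have e1: "tr n m A (R1 n m (3/5) (4/5) a b) = tr n m B (R1 n m (3/5) (4/5) a b)"
        by (rule eq[OF density_R1[OF ab False c1]])
      have e2: "tr n m A (R1 n m (3/5) (4/5 * \<i>) a b) = tr n m B (R1 n m (3/5) (4/5 * \<i>) a b)"
        by (rule eq[OF density_R1[OF ab False c2]])
      have da: "A a a = B a a" and db: "A b b = B b b" using diag ab by auto
      from e1 have s1: "A a b + A b a = B a b + B b a"
        unfolding tr_R1[OF ab False] da db by (rule alg1)
      from e2 have s2: "A a b - A b a = B a b - B b a"
        unfolding tr_R1[OF ab False] da db by (rule alg2)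
      from s1 s2 have "(A a b + A b a) + (A a b - A b a) = (B a b + B b a) + (B a b - B b a)" by simp
      then show ?thesis by (simp add: algebra_simps)
    qed
  qed
qed

lemma invariant_sym: "invariant m (sym_avg m \<rho>)"
  unfolding invariant_def using perm_sym_avg by blast

lemma S_avg_iff:
  fixes F :: "op \<Rightarrow> nat \<Rightarrow> op"
  assumes n: "n \<ge> 2" and m: "m \<ge> 2" and sa: "self_adjoint n m S"
    and conv: "\<And>\<rho>0. density_op n m \<rho>0 \<Longrightarrow> converges_to n m (F \<rho>0) (sym_avg m \<rho>0)"
    and ach: "achieves_SSC n m F"
    and inv: "\<And>A \<rho>0 t. invariant m A \<Longrightarrow> density_op n m \<rho>0 \<Longrightarrow> tr n m A (F \<rho>0 t) = tr n m A \<rho>0"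
  shows "achieves_S_avg_SSC n m F S \<longleftrightarrow> is_local_average n m S"
proof
  assume h: "achieves_S_avg_SSC n m F S"
  then obtain \<sigma> where herm: "hermitian1 n \<sigma>" and lim: "\<And>\<rho>0 l. density_op n m \<rho>0 \<Longrightarrow> l < m \<Longrightarrow>
      (\<lambda>t. tr n m (local_op n m l \<sigma>) (F \<rho>0 t)) \<longlonglongrightarrow> tr n m S \<rho>0"
    unfolding achieves_S_avg_SSC_def by blast
  have m0: "0 < m" using m by simp
  have "S = Savg n m \<sigma>"
  proof (rule determ[OF _ Savg_supported n])
    show "supported n m S" using sa unfolding self_adjoint_def by blast
    show "1 \<le> m" using m by simp
    fix \<rho> assume d: "density_op n m \<rho>"
    have l1: "(\<lambda>t. tr n m (local_op n m 0 \<sigma>) (F \<rho> t)) \<longlonglongrightarrow> tr n m S \<rho>" by (rule lim[OF d m0])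
    have l2: "(\<lambda>t. tr n m (local_op n m 0 \<sigma>) (F \<rho> t)) \<longlonglongrightarrow> tr n m (local_op n m 0 \<sigma>) (sym_avg m \<rho>)"
      by (rule tr_conv[OF conv[OF d]])
    have "tr n m S \<rho> = tr n m (local_op n m 0 \<sigma>) (sym_avg m \<rho>)" using LIMSEQ_unique[OF l1 l2] .
    also have "\<dots> = tr n m (Savg n m \<sigma>) (sym_avg m \<rho>)"
      using tr_Savg[OF invariant_sym[of m \<rho>] m0, where n=n and \<sigma>=\<sigma>] by simp
    also have "\<dots> = tr n m (Savg n m \<sigma>) \<rho>" by (rule tr_sym[OF Savg_invariant])
    finally show "tr n m S \<rho> = tr n m (Savg n m \<sigma>) \<rho>" .
  qed
  then show "is_local_average n m S" unfolding is_local_average_def Savg_def using herm by blast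
next
  assume "is_local_average n m S"
  then obtain \<sigma> where herm: "hermitian1 n \<sigma>" and S: "S = Savg n m \<sigma>"
    unfolding is_local_average_def Savg_def by blast
  have "(\<lambda>t. tr n m (local_op n m l \<sigma>) (F \<rho>0 t)) \<longlonglongrightarrow> tr n m S \<rho>0 \<and>
        (\<lambda>t. tr n m S (F \<rho>0 t)) \<longlonglongrightarrow> tr n m S \<rho>0" if d: "density_op n m \<rho>0" and l: "l < m" for \<rho>0 l
  proof
    have "tr n m (local_op n m l \<sigma>) (sym_avg m \<rho>0) = tr n m (Savg n m \<sigma>) (sym_avg m \<rho>0)"
      using tr_Savg[OF invariant_sym[of m \<rho>0] l, where n=n and \<sigma>=\<sigma>] by simp
    also have "\<dots> = tr n m S \<rho>0" unfolding S by (rule tr_sym[OF Savg_invariant])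
    finally show "(\<lambda>t. tr n m (local_op n m l \<sigma>) (F \<rho>0 t)) \<longlonglongrightarrow> tr n m S \<rho>0"
      using tr_conv[OF conv[OF d], where A="local_op n m l \<sigma>"] by simp
    have "\<And>t. tr n m S (F \<rho>0 t) = tr n m S \<rho>0" unfolding S by (rule inv[OF Savg_invariant d])
    then show "(\<lambda>t. tr n m S (F \<rho>0 t)) \<longlonglongrightarrow> tr n m S \<rho>0" by simp
  qed
  then show "achieves_S_avg_SSC n m F S"
    unfolding achieves_S_avg_SSC_def using ach herm by blast
qed

lemma part1_conv:
  assumes conn: "connected_graph m E" and \<alpha>: "0 < \<alpha>" "\<alpha> < 1" and ps: "periodic_schedule E es"
  shows "converges_to n m (traj \<alpha> es \<rho>0) (sym_avg m \<rho>0)"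
proof -
  have es: "\<forall>t. es t \<in> E" using ps unfolding periodic_schedule_def by blast
  obtain P where P: "P > 0" "\<forall>t. es (t + P) = es t" "E \<subseteq> es ` {..<P}"
    using ps unfolding periodic_schedule_def by blast
  have edge: "fst (es t) < m \<and> snd (es t) < m" for t using edge_Esub[OF conn] es by blast
  define X where "X t = dif (traj \<alpha> es \<rho>0 t) (sym_avg m \<rho>0)" for t
  have "\<forall>t. X (Suc t) = gossip \<alpha> (es t) (X t)"
    unfolding X_def using traj_X edge by blast
  moreover have "\<forall>t. sym_avg m (X t) = (\<lambda>a b. 0)"
    unfolding X_def using dif_sym_zero traj_sym edge by blast
  ultimately have "(\<lambda>t. NN n m (X t)) \<longlonglongrightarrow> 0"
    by (intro periodic_decay[OF conn conn_finite[OF conn] \<alpha> es P])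
  then show ?thesis unfolding X_def by (rule conv_NN)
qed

lemma part2_conv:
  assumes conn: "connected_graph m E" and \<alpha>: "0 < \<alpha>" "\<alpha> < 1" and Q: "set_pmf Q = E"
  shows "converges_to n m (exp_traj \<alpha> Q E \<rho>0) (sym_avg m \<rho>0)"
proof -
  define Y where "Y t = dif (exp_traj \<alpha> Q E \<rho>0 t) (sym_avg m \<rho>0)" for t
  have "\<forall>t. Y (Suc t) = (\<lambda>a b. \<Sum>e\<in>E. complex_of_real (pmf Q e) * gossip \<alpha> e (Y t) a b)"
    unfolding Y_def using exp_traj_X[OF conn Q] by blast
  moreover have "\<forall>t. sym_avg m (Y t) = (\<lambda>a b. 0)"
    unfolding Y_def using dif_sym_zero exp_traj_sym[OF conn Q] by blast
  ultimately have "(\<lambda>t. NN n m (Y t)) \<longlonglongrightarrow> 0"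
    by (intro exp_decay[OF conn \<alpha> Q])
  then show ?thesis unfolding Y_def by (rule conv_NN)
qed

theorem theorem2:
  fixes n m :: nat and E :: "(nat \<times> nat) set" and \<alpha> :: real and Q :: "(nat \<times> nat) pmf"
  assumes "n \<ge> 2" and "m \<ge> 2" and "connected_graph m E"
    and "0 < \<alpha>" and "\<alpha> < 1"
    and "set_pmf Q = E"
  shows
    "(\<forall>es. periodic_schedule E es \<longrightarrow>
        (\<forall>\<rho>0. density_op n m \<rho>0 \<longrightarrow>
           converges_to n m (traj \<alpha> es \<rho>0) (sym_avg m \<rho>0) \<and> sym_avg m \<rho>0 \<in> SSC n m)
        \<and> achieves_SSC n m (traj \<alpha> es))
   \<and> ((\<forall>\<rho>0. density_op n m \<rho>0 \<longrightarrow>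
           converges_to n m (exp_traj \<alpha> Q E \<rho>0) (sym_avg m \<rho>0) \<and> sym_avg m \<rho>0 \<in> SSC n m)
        \<and> achieves_SSC n m (exp_traj \<alpha> Q E))
   \<and> (\<forall>\<rho>0. density_op n m \<rho>0 \<longrightarrow> sym_avg m \<rho>0 \<in> SSC n m \<and>
        (\<forall>\<delta>>0. \<forall>\<epsilon>>0. \<exists>T>0.
           measure_pmf.prob (Pi_pmf {..<T} undefined (\<lambda>_. Q))
             {es. Re (op_trace n m (op_mult n m (\<lambda>a b. traj \<alpha> es \<rho>0 T a b - sym_avg m \<rho>0 a b)
                                              (\<lambda>a b. traj \<alpha> es \<rho>0 T a b - sym_avg m \<rho>0 a b))) > \<epsilon>}
           < \<delta>))
   \<and> (\<forall>S. self_adjoint n m S \<longrightarrow>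
        (\<forall>es. periodic_schedule E es \<longrightarrow>
           (achieves_S_avg_SSC n m (traj \<alpha> es) S \<longleftrightarrow> is_local_average n m S))
        \<and> (achieves_S_avg_SSC n m (exp_traj \<alpha> Q E) S \<longleftrightarrow> is_local_average n m S))"
proof -
  note n = assms(1) and m = assms(2) and conn = assms(3) and \<alpha> = assms(4,5) and Q = assms(6)
  have ach1: "achieves_SSC n m (traj \<alpha> es)" if "periodic_schedule E es" for es
    by (rule achieves_from_conv[OF part1_conv[OF conn \<alpha> that]])
  have ach2: "achieves_SSC n m (exp_traj \<alpha> Q E)"
    by (rule achieves_from_conv[OF part2_conv[OF conn \<alpha> Q]])
  have edges: "\<forall>t. fst (es t) < m \<and> snd (es t) < m" if "periodic_schedule E es" for es
    using that edge_Esub[OF conn] unfolding periodic_schedule_def by blast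
  have c1: "\<forall>es. periodic_schedule E es \<longrightarrow>
        (\<forall>\<rho>0. density_op n m \<rho>0 \<longrightarrow>
           converges_to n m (traj \<alpha> es \<rho>0) (sym_avg m \<rho>0) \<and> sym_avg m \<rho>0 \<in> SSC n m)
        \<and> achieves_SSC n m (traj \<alpha> es)"
    using part1_conv[OF conn \<alpha>] sym_in_SSC ach1 by blast
  have c2: "(\<forall>\<rho>0. density_op n m \<rho>0 \<longrightarrow>
           converges_to n m (exp_traj \<alpha> Q E \<rho>0) (sym_avg m \<rho>0) \<and> sym_avg m \<rho>0 \<in> SSC n m)
        \<and> achieves_SSC n m (exp_traj \<alpha> Q E)"
    using part2_conv[OF conn \<alpha> Q] sym_in_SSC ach2 by blast
  have c3: "\<forall>\<rho>0. density_op n m \<rho>0 \<longrightarrow> sym_avg m \<rho>0 \<in> SSC n m \<and>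
        (\<forall>\<delta>>0. \<forall>\<epsilon>>0. \<exists>T>0.
           measure_pmf.prob (Pi_pmf {..<T} undefined (\<lambda>_. Q))
             {es. Re (op_trace n m (op_mult n m (\<lambda>a b. traj \<alpha> es \<rho>0 T a b - sym_avg m \<rho>0 a b)
                                              (\<lambda>a b. traj \<alpha> es \<rho>0 T a b - sym_avg m \<rho>0 a b))) > \<epsilon>}
           < \<delta>)"
    using sym_in_SSC part3[OF conn \<alpha> Q] by blast
  have c4: "\<forall>S. self_adjoint n m S \<longrightarrow>
        (\<forall>es. periodic_schedule E es \<longrightarrow>
           (achieves_S_avg_SSC n m (traj \<alpha> es) S \<longleftrightarrow> is_local_average n m S))
        \<and> (achieves_S_avg_SSC n m (exp_traj \<alpha> Q E) S \<longleftrightarrow> is_local_average n m S)"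
  proof (intro allI impI conjI)
    fix S es assume sa: "self_adjoint n m S" and ps: "periodic_schedule E es"
    show "achieves_S_avg_SSC n m (traj \<alpha> es) S \<longleftrightarrow> is_local_average n m S"
      by (rule S_avg_iff[OF n m sa part1_conv[OF conn \<alpha> ps] ach1[OF ps] tr_traj[OF _ edges[OF ps]]])
  next
    fix S assume sa: "self_adjoint n m S"
    show "achieves_S_avg_SSC n m (exp_traj \<alpha> Q E) S \<longleftrightarrow> is_local_average n m S"
      by (rule S_avg_iff[OF n m sa part2_conv[OF conn \<alpha> Q] ach2 tr_exp[OF _ conn Q]])
  qed
  show ?thesis using c1 c2 c3 c4 by blast
qed

end
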